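(* Let $f,g\in G_B^I$. Then $f\boxtimes g\in G_B^I$ and the S-transform satisfies $$S_{f\boxtimes g}=S_g\cdot\big(S_f\circ(S_g^{-1}\cdot I\cdot S_g)\big),$$ where $S_g^{-1}$ denotes the multiplicative inverse of $S_g$ in $G_B^{\mathrm{inv}}$.
   Context: Let $B$ be a unital algebra over a field $\mathbb K$ of characteristic zero. $\mathrm{Mult}[[B]]$ is the set of sequences $f=(f_n)_{n\ge0}$ of $\mathbb K$-multilinear maps $f_n:B^{n}\to B$ (so $f_0\in B$). Product: $(f\cdot g)_n(x_1,\dots,x_n)=\sum_{k=0}^n f_k(x_1,\dots,x_k)\,g_{n-k}(x_{k+1},\dots,x_n)$, with unit $1=(\delta_{n,0}1_B)_n$. For $g$ with $g_0=0$, composition: $(f\circ g)_n(x_1,\dots,x_n)=\sum_{l\ge0}\sum_{k_1+\dots+k_l=n,\,k_i\ge1} f_l\big(g_{k_1}(x_1,\dots,x_{k_1}),\dots,g_{k_l}(x_{n-k_l+1},\dots,x_n)\big)$, with unit $I=(\delta_{n,1}\mathrm{id}_B)_n$. Composition binds tighter than product. $G_B^{\mathrm{inv}}=\{f: f_0\in B^\times\}$ is a group under $\cdot$; $G_B^{\mathrm{dif}}=\{f: f_0=0,\ f_1\in GL(B)\}$ is a group under $\circ$ (inverse $f^{\circ-1}$); $G_B^I=\{I\cdot F: F\in G_B^{\mathrm{inv}}\}\subseteq G_B^{\mathrm{dif}}$, where $(I\cdot F)_n(x_1,\dots,x_n)=x_1F_{n-1}(x_2,\dots,x_n)$. For $f\in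 G_B^I$, one has $f^{\circ-1}\in G_B^I$, and the S-transform $S_f\in G_B^{\mathrm{inv}}$ is defined by $f^{\circ-1}=I\cdot S_f$. Planar binary trees: $Y_0=\{|\}$ (the empty tree) and for $n\ge1$, $Y_n=\{\sigma\vee\tau:\sigma\in Y_k,\tau\in Y_l,k+l=n-1\}$, where $\sigma\vee\tau$ is the tree with a root whose left subtree is $\sigma$ and right subtree is $\tau$; $|\tau|$ is the number of internal vertices; $Y=\bigcup_n Y_n$. Every $\tau\in Y_n$, $n\ge1$, is uniquely written $\tau=\tau_1\vee(\tau_2\vee(\cdots\vee(\tau_k\vee|)\cdots))$ with $k\ge1$; put $j_i=|\tau_1|+\dots+|\tau_i|+i$ (so $j_0=0$, $j_k=n$). For $f,g\in\mathrm{Mult}[[B]]$ define recursively $(f\cup g)_|=1$ and $(f\cup g)_\tau(x_1,\dots,x_n)=g_k\big((g\cup f)_{\tau_1}(x_1,\dots,x_{j_1-1})x_{j_1},\ \dots,\ (g\cup f)_{\tau_k}(x_{j_{k-1}+1},\dots,x_{j_k-1})x_{j_k}\big)$ (the roles of $f,g$ alternate at each level). Define $R:Y\to Y$ by $R(|)=|$, $R(\sigma\vee\tau)=(|\vee R(\sigma))\vee R(\tau)$ (so $|R(\tau)|=2|\tau|$). The boxed convolution $f\boxtimes g\in\mathrm{Mult}[[B]]$ is $(f\boxtimes g)_0=g_0$ and for $n\ge1$, $(f\boxtimes g)_n(x_1,\dots,x_n)=\sum_{\tau\in Y_n}(f\cup g)_{R(\tau)}(x_1,1,x_2,1,\dots,x_n,1)$.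 *)

theory Defs
  imports Complex_Main
begin

text \<open>The unital K-algebra B is a type 'b of class ring_1 together with
a scalar multiplication scale :: 'k => 'b => 'b by a field 'k of characteristic zero,
making B a K-module whose multiplication is K-bilinear.
An element f of Mult[[B]] is represented as a function f :: 'b list => 'b, where
f applied to a list of length n is the n-th component f_n (so f [] = f_0).\<close>

definition algebra_over :: "('k::field_char_0 \<Rightarrow> 'b::ring_1 \<Rightarrow> 'b) \<Rightarrow> bool" where
  "algebra_over scale \<longleftrightarrow> module scale \<and>
     (\<forall>c x y. scale c (x * y) = scale c x * y \<and> scale c (x * y) = x * scale c y)"

definition multilinear :: "('k \<Rightarrow> 'b \<Rightarrow> 'b) \<Rightarrow> ('b::ring_1 list \<Rightarrow> 'b) \<Rightarrow> nat \<Rightarrow> bool" where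
  "multilinear scale F n \<longleftrightarrow>
     (\<forall>xs i a b c. length xs = n \<and> i < n \<longrightarrow>
        F (xs[i := a + b]) = F (xs[i := a]) + F (xs[i := b]) \<and>
        F (xs[i := scale c a]) = scale c (F (xs[i := a])))"

definition Mult :: "('k \<Rightarrow> 'b \<Rightarrow> 'b) \<Rightarrow> ('b::ring_1 list \<Rightarrow> 'b) set" where
  "Mult scale = {f. \<forall>n. multilinear scale f n}"

definition mprod :: "('b::ring_1 list \<Rightarrow> 'b) \<Rightarrow> ('b list \<Rightarrow> 'b) \<Rightarrow> 'b list \<Rightarrow> 'b" where
  "mprod f g xs = (\<Sum>k = 0..length xs. f (take k xs) * g (drop k xs))"

definition mone :: "'b::ring_1 list \<Rightarrow> 'b" where
  "mone xs = (if xs = [] then 1 else 0)"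

text \<open>Splittings of a list into consecutive nonempty blocks (ordered compositions).\<close>
function blocks :: "'a list \<Rightarrow> 'a list list list" where
  "blocks [] = [[]]"
| "blocks (x # xs) =
     concat (map (\<lambda>k. map (\<lambda>bs. take k (x # xs) # bs) (blocks (drop k (x # xs))))
                 [1..<length xs + 2])"
  by pat_completeness auto
termination
  by (relation "measure length") auto

definition mcomp :: "('b::ring_1 list \<Rightarrow> 'b) \<Rightarrow> ('b list \<Rightarrow> 'b) \<Rightarrow> 'b list \<Rightarrow> 'b" where
  "mcomp f g xs = sum_list (map (\<lambda>bs. f (map g bs)) (blocks xs))"

definition mI :: "'b::ring_1 list \<Rightarrow> 'b" where
  "mI xs = (if length xs = 1 then hd xs else 0)"

definition is_unit_ring :: "'b::ring_1 \<Rightarrow> bool" where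
  "is_unit_ring x \<longleftrightarrow> (\<exists>y. x * y = 1 \<and> y * x = 1)"

definition G_inv :: "('k \<Rightarrow> 'b \<Rightarrow> 'b) \<Rightarrow> ('b::ring_1 list \<Rightarrow> 'b) set" where
  "G_inv scale = {f \<in> Mult scale. is_unit_ring (f [])}"

text \<open>f_1 in GL(B): f_1 is linear (by multilinearity) and bijective.\<close>
definition G_dif :: "('k \<Rightarrow> 'b \<Rightarrow> 'b) \<Rightarrow> ('b::ring_1 list \<Rightarrow> 'b) set" where
  "G_dif scale = {f \<in> Mult scale. f [] = 0 \<and> bij (\<lambda>x. f [x])}"

definition G_I :: "('k \<Rightarrow> 'b \<Rightarrow> 'b) \<Rightarrow> ('b::ring_1 list \<Rightarrow> 'b) set" where
  "G_I scale = {mprod mI F | F. F \<in> G_inv scale}"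

definition minv :: "('k \<Rightarrow> 'b \<Rightarrow> 'b) \<Rightarrow> ('b::ring_1 list \<Rightarrow> 'b) \<Rightarrow> 'b list \<Rightarrow> 'b" where
  "minv scale f = (THE h. h \<in> Mult scale \<and> mprod f h = mone \<and> mprod h f = mone)"

definition cinv :: "('k \<Rightarrow> 'b \<Rightarrow> 'b) \<Rightarrow> ('b::ring_1 list \<Rightarrow> 'b) \<Rightarrow> 'b list \<Rightarrow> 'b" where
  "cinv scale f = (THE h. h \<in> G_dif scale \<and> mcomp f h = mI \<and> mcomp h f = mI)"

definition S_transform :: "('k \<Rightarrow> 'b \<Rightarrow> 'b) \<Rightarrow> ('b::ring_1 list \<Rightarrow> 'b) \<Rightarrow> 'b list \<Rightarrow> 'b" where
  "S_transform scale f = (THE F. F \<in> G_inv scale \<and> cinv scale f = mprod mI F)"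

text \<open>Planar binary trees; the number of internal vertices is the datatype size.\<close>
datatype tree = Leaf | Node tree tree

text \<open>cup f g tau and the argument list along the right spine of tau
(the roles of f and g alternate at each level).\<close>
function cup :: "('b::ring_1 list \<Rightarrow> 'b) \<Rightarrow> ('b list \<Rightarrow> 'b) \<Rightarrow> tree \<Rightarrow> 'b list \<Rightarrow> 'b"
  and cup_args :: "('b::ring_1 list \<Rightarrow> 'b) \<Rightarrow> ('b list \<Rightarrow> 'b) \<Rightarrow> tree \<Rightarrow> 'b list \<Rightarrow> 'b list" where
  "cup f g Leaf xs = 1"
| "cup f g (Node l r) xs = g (cup_args f g (Node l r) xs)"
| "cup_args f g Leaf xs = []"
| "cup_args f g (Node l r) xs =
     (cup g f l (take (size l) xs) * xs ! (size l)) # cup_args f g r (drop (size l + 1) xs)"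
  by pat_completeness auto
termination
  by (relation "measure (\<lambda>p. case p of Inl (f, g, t, xs) \<Rightarrow> 2 * size t + 1
                                    | Inr (f, g, t, xs) \<Rightarrow> 2 * size t)") auto

fun Rt :: "tree \<Rightarrow> tree" where
  "Rt Leaf = Leaf"
| "Rt (Node s t) = Node (Node Leaf (Rt s)) (Rt t)"

definition boxconv :: "('b::ring_1 list \<Rightarrow> 'b) \<Rightarrow> ('b list \<Rightarrow> 'b) \<Rightarrow> 'b list \<Rightarrow> 'b" where
  "boxconv f g xs = (if xs = [] then g []
     else (\<Sum>\<tau> \<in> {t. size t = length xs}. cup f g (Rt \<tau>) (concat (map (\<lambda>x. [x, 1]) xs))))"

end

theory Submission
  imports Defs
begin

declare blocks.simps(2)[simp del]


lemma blocks_iff: "bs \<in> set (blocks xs) \<longleftrightarrow> concat bs = xs \<and> [] \<notin> set bs"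
proof (induction xs arbitrary: bs rule: blocks.induct)
  case 1
  then show ?case by (cases bs) auto
next
  case (2 x xs)
  show ?case
  proof
    assume "bs \<in> set (blocks (x # xs))"
    then have "\<exists>k\<in>set [1..<length xs+2]. bs \<in> set (map (\<lambda>bs. take k (x#xs) # bs) (blocks (drop k (x#xs))))"
      by (simp only: blocks.simps set_concat set_map) fastforce
    then obtain k where k0: "k \<in> set [1..<length xs + 2]" and
       "bs \<in> set (map (\<lambda>bs. take k (x#xs) # bs) (blocks (drop k (x#xs))))" by blast
    then obtain bs' where bs': "bs' \<in> set (blocks (drop k (x#xs)))"
      and bs: "bs = take k (x#xs) # bs'" unfolding set_map by blast
    have k: "k \<in> {1..<length xs + 2}" using k0 by (simp only: set_upt)
    from 2[OF k0] bs' have "concat bs' = drop k (x#xs) \<and> [] \<notin> set bs'" by blast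
    with bs k show "concat bs = x # xs \<and> [] \<notin> set bs" by auto
  next
    assume a: "concat bs = x # xs \<and> [] \<notin> set bs"
    then obtain b bs' where bs: "bs = b # bs'" by (cases bs) auto
    define k where "k = length b"
    from a bs have b: "b \<noteq> []" "b @ concat bs' = x # xs" "[] \<notin> set bs'" by auto
    have tk: "take k (x#xs) = b" "drop k (x#xs) = concat bs'" unfolding k_def b(2)[symmetric] by simp_all
    have "length b \<le> length (x#xs)" unfolding b(2)[symmetric] by simp
    moreover have "length b \<ge> 1" using b(1) by (cases b) simp_all
    ultimately have kr: "k \<in> {1..<length xs + 2}" unfolding k_def by simp
    have kr0: "k \<in> set [1..<length xs + 2]" using kr by (simp only: set_upt)
    have "bs' \<in> set (blocks (drop k (x#xs)))" by (subst 2[OF kr0]) (simp add: tk b(3))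
    then have X: "bs \<in> set (map (\<lambda>bs. take k (x#xs) # bs) (blocks (drop k (x#xs))))"
      unfolding bs tk(1) set_map by (rule imageI)
    have Y: "map (\<lambda>bs. take k (x#xs) # bs) (blocks (drop k (x#xs))) \<in>
        set (map (\<lambda>k. map (\<lambda>bs. take k (x#xs) # bs) (blocks (drop k (x#xs)))) [1..<length xs + 2])"
      using kr0 unfolding set_map by (rule imageI)
    show "bs \<in> set (blocks (x # xs))"
      unfolding blocks.simps(2)[of x xs] set_concat by (rule UnionI[OF imageI[OF Y, of set] X])
  qed
qed

lemma blocks_nonempty: "blocks xs \<noteq> []"
proof -
  have "(if xs = [] then [] else [xs]) \<in> set (blocks xs)" unfolding blocks_iff by simp
  then show ?thesis by auto
qed

lemma distinct_blocks: "distinct (blocks xs)"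
proof (induction xs rule: blocks.induct)
  case 1
  then show ?case by simp
next
  case (2 x xs)
  let ?phi = "\<lambda>k. map (\<lambda>bs. take k (x # xs) # bs) (blocks (drop k (x # xs)))"
  have hd_len: "length (hd ys) = k" if "k \<in> {1..<length xs+2}" "ys \<in> set (?phi k)" for k ys
  proof -
    from that(2) obtain bs where "ys = take k (x # xs) # bs" by auto
    then show ?thesis using that(1) by simp
  qed
  have ne: "\<And>k. ?phi k \<noteq> []" using blocks_nonempty by auto
  have inj: "inj_on ?phi (set [1..<length xs + 2])"
  proof (rule inj_onI)
    fix k j assume k: "k \<in> set [1..<length xs + 2]" and j: "j \<in> set [1..<length xs + 2]"
      and e: "?phi k = ?phi j"
    obtain ys where ys: "ys \<in> set (?phi k)" using ne[of k] by (meson list.set_sel(1))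
    then have ys2: "ys \<in> set (?phi j)" using e by simp
    have "length (hd ys) = k" using hd_len[OF _ ys] k unfolding set_upt by blast
    moreover have "length (hd ys) = j" using hd_len[OF _ ys2] j unfolding set_upt by blast
    ultimately show "k = j" by simp
  qed
  show ?case
    unfolding blocks.simps
  proof (rule distinct_concat)
    show "distinct (map ?phi [1..<length xs + 2])"
      unfolding distinct_map using inj distinct_upt by blast
    show "distinct ys" if "ys \<in> set (map ?phi [1..<length xs + 2])" for ys
    proof -
      from that obtain k where k: "k \<in> set [1..<length xs + 2]" "ys = ?phi k" unfolding set_map by blast
      have "distinct (blocks (drop k (x # xs)))" using 2[OF k(1)] .
      moreover have "inj_on (\<lambda>bs. take k (x # xs) # bs) (set (blocks (drop k (x # xs))))"
        by (rule inj_onI) blast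
      ultimately show ?thesis unfolding k(2) distinct_map by (rule conjI)
    qed
    show "\<And>ys zs. ys \<in> set (map ?phi [1..<length xs + 2]) \<Longrightarrow> zs \<in> set (map ?phi [1..<length xs + 2])
           \<Longrightarrow> ys \<noteq> zs \<Longrightarrow> set ys \<inter> set zs = {}"
    proof -
      fix ys zs assume "ys \<in> set (map ?phi [1..<length xs + 2])" "zs \<in> set (map ?phi [1..<length xs + 2])" "ys \<noteq> zs"
      then obtain k j where k: "k \<in> {1..<length xs+2}" "ys = ?phi k" and j: "j \<in> {1..<length xs+2}" "zs = ?phi j" "k \<noteq> j"
        unfolding set_map set_upt by blast
      show "set ys \<inter> set zs = {}"
      proof (rule ccontr)
        assume "set ys \<inter> set zs \<noteq> {}"
        then obtain w where "w \<in> set ys" "w \<in> set zs" by blast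
        then have "length (hd w) = k" "length (hd w) = j" using hd_len[of k w] hd_len[of j w] k j by simp_all
        then show False using j by simp
      qed
    qed
  qed
qed

definition BL :: "'a list \<Rightarrow> 'a list list set" where
  "BL xs = {bs. concat bs = xs \<and> [] \<notin> set bs}"

lemma set_blocks: "set (blocks xs) = BL xs"
  using blocks_iff unfolding BL_def by blast

lemma finite_BL: "finite (BL xs)"
  by (metis List.finite_set set_blocks)

lemma sum_list_blocks: "sum_list (map h (blocks xs)) = (\<Sum>bs\<in>BL xs. h bs)"
  by (metis distinct_blocks set_blocks sum_list_distinct_conv_sum_set)

lemma mcomp_BL: "mcomp f g xs = (\<Sum>bs\<in>BL xs. f (map g bs))"
  unfolding mcomp_def by (rule sum_list_blocks)


definition addall :: "('b::ring_1 list \<Rightarrow> 'b) \<Rightarrow> bool" where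
  "addall H \<longleftrightarrow> (\<forall>ps ss x y. H (ps @ (x + y) # ss) = H (ps @ x # ss) + H (ps @ y # ss))"

definition lin_at :: "('k \<Rightarrow> 'b \<Rightarrow> 'b) \<Rightarrow> ('b::ring_1 list \<Rightarrow> 'b) \<Rightarrow> 'b list \<Rightarrow> 'b list \<Rightarrow> bool" where
  "lin_at sc H ps ss \<longleftrightarrow> (\<forall>x y. H (ps @ (x + y) # ss) = H (ps @ x # ss) + H (ps @ y # ss)) \<and>
      (\<forall>c x. H (ps @ sc c x # ss) = sc c (H (ps @ x # ss)))"

definition ml :: "('k \<Rightarrow> 'b \<Rightarrow> 'b) \<Rightarrow> ('b::ring_1 list \<Rightarrow> 'b) \<Rightarrow> nat \<Rightarrow> bool" where
  "ml sc H n \<longleftrightarrow> (\<forall>ps ss. length ps + length ss + 1 = n \<longrightarrow> lin_at sc H ps ss)"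

lemma multilinear_ml: "multilinear sc H n \<longleftrightarrow> ml sc H n"
proof
  assume m: "multilinear sc H n"
  show "ml sc H n" unfolding ml_def lin_at_def
  proof (intro allI impI conjI)
    fix ps ss :: "'b list" and x y :: 'b and c
    assume l: "length ps + length ss + 1 = n"
    let ?xs = "ps @ 0 # ss"
    have l2: "length ?xs = n" "length ps < n" using l by auto
    have u: "\<And>z. ?xs[length ps := z] = ps @ z # ss" by (simp add: list_update_append)
    have m': "\<forall>xs i a b c. length xs = n \<and> i < n \<longrightarrow>
        H (xs[i := a + b]) = H (xs[i := a]) + H (xs[i := b]) \<and>
        H (xs[i := sc c a]) = sc c (H (xs[i := a]))" using m unfolding multilinear_def .
    from m'[rule_format, of ?xs "length ps" x y c] l2
    have "H (?xs[length ps := x + y]) = H (?xs[length ps := x]) + H (?xs[length ps := y]) \<and>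
        H (?xs[length ps := sc c x]) = sc c (H (?xs[length ps := x]))" by blast
    then show "H (ps @ (x + y) # ss) = H (ps @ x # ss) + H (ps @ y # ss)"
      and "H (ps @ sc c x # ss) = sc c (H (ps @ x # ss))" unfolding u by blast+
  qed
next
  assume m: "ml sc H n"
  show "multilinear sc H n" unfolding multilinear_def
  proof (intro allI impI conjI)
    fix xs :: "'b list" and i a b c
    assume l: "length xs = n \<and> i < n"
    have u: "\<And>z. xs[i := z] = take i xs @ z # drop (Suc i) xs"
      using l by (simp add: upd_conv_take_nth_drop)
    have len: "length (take i xs) + length (drop (Suc i) xs) + 1 = n" using l by auto
    from m len show "H (xs[i := a + b]) = H (xs[i := a]) + H (xs[i := b])"
      unfolding ml_def lin_at_def u by blast
    from m len show "H (xs[i := sc c a]) = sc c (H (xs[i := a]))"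
      unfolding ml_def lin_at_def u by blast
  qed
qed

lemma Mult_ml: "H \<in> Mult sc \<longleftrightarrow> (\<forall>n. ml sc H n)"
  using multilinear_ml[of sc H] unfolding Mult_def by auto

lemma ml_lin_at: "ml sc H (length ps + length ss + 1) \<Longrightarrow> lin_at sc H ps ss"
  unfolding ml_def by blast

lemma ml_all_addall: "(\<forall>n. ml sc H n) \<Longrightarrow> addall H"
  unfolding addall_def ml_def lin_at_def by blast

lemma ml_cong: "(\<And>xs. length xs = n \<Longrightarrow> H xs = H' xs) \<Longrightarrow> ml sc H n \<longleftrightarrow> ml sc H' n"
  unfolding ml_def lin_at_def by auto

lemma addall_zero: "addall H \<Longrightarrow> H (ps @ 0 # ss) = 0"
proof -
  assume "addall H"
  then have "H (ps @ (0 + 0) # ss) = H (ps @ 0 # ss) + H (ps @ 0 # ss)" unfolding addall_def by blast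
  then show ?thesis by simp
qed

lemma addall_sum: 
  assumes "addall H" "finite A"
  shows "H (ps @ (\<Sum>i\<in>A. v i) # ss) = (\<Sum>i\<in>A. H (ps @ v i # ss))"
  using assms(2)
proof (induction A rule: finite_induct)
  case empty
  then show ?case using addall_zero[OF assms(1)] by simp
next
  case (insert x F)
  then show ?case using assms(1) unfolding addall_def by simp
qed

lemma addall_neg:
  assumes "addall H" shows "H (ps @ (- x) # ss) = - H (ps @ x # ss)"
proof -
  have "H (ps @ (x + - x) # ss) = H (ps @ x # ss) + H (ps @ (- x) # ss)" using assms unfolding addall_def by blast
  then show ?thesis using addall_zero[OF assms] by (simp add: eq_neg_iff_add_eq_0 add.commute)
qed

definition SP :: "'a list \<Rightarrow> ('a list \<times> 'a list) set" where
  "SP xs = {(u, v). u @ v = xs}"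

lemma SP_image: "SP xs = (\<lambda>k. (take k xs, drop k xs)) ` {0..length xs}"
proof
  show "SP xs \<subseteq> (\<lambda>k. (take k xs, drop k xs)) ` {0..length xs}"
  proof
    fix p assume "p \<in> SP xs"
    then obtain u v where p: "p = (u, v)" "u @ v = xs" unfolding SP_def by blast
    then have "p = (take (length u) xs, drop (length u) xs)" by auto
    moreover have "length u \<in> {0..length xs}" using p by auto
    ultimately show "p \<in> (\<lambda>k. (take k xs, drop k xs)) ` {0..length xs}" by blast
  qed
  show "(\<lambda>k. (take k xs, drop k xs)) ` {0..length xs} \<subseteq> SP xs"
    unfolding SP_def by auto
qed

lemma finite_SP: "finite (SP xs)"
  unfolding SP_image by simp

lemma sum_split_SP: "(\<Sum>k=0..length xs. h (take k xs) (drop k xs)) = (\<Sum>(u,v)\<in>SP xs. h u v)"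
proof -
  have inj: "inj_on (\<lambda>k. (take k xs, drop k xs)) {0..length xs}"
    by (rule inj_onI) (metis (no_types, lifting) Pair_inject atLeastAtMost_iff length_take min.absorb2)
  show ?thesis unfolding SP_image sum.reindex[OF inj] by simp
qed

lemma mprod_SP: "mprod a b xs = (\<Sum>(u,v)\<in>SP xs. a u * b v)"
  unfolding mprod_def using sum_split_SP[of "\<lambda>u v. a u * b v" xs] by simp

lemma mprod_map: "mprod a b (map c bs) = (\<Sum>(u,v)\<in>SP bs. a (map c u) * b (map c v))"
  unfolding mprod_def using sum_split_SP[of "\<lambda>u v. a (map c u) * b (map c v)" bs]
  by (simp add: take_map drop_map)

lemma mprod_assoc: "mprod (mprod a b) c = mprod a (mprod b c)"
proof
  fix xs
  have "mprod (mprod a b) c xs = (\<Sum>(u,w)\<in>SP xs. (\<Sum>(u1,u2)\<in>SP u. a u1 * b u2) * c w)"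
    unfolding mprod_SP ..
  also have "\<dots> = (\<Sum>(u,w)\<in>SP xs. (\<Sum>(u1,u2)\<in>SP u. a u1 * b u2 * c w))"
    by (simp add: sum_distrib_right case_prod_unfold)
  also have "\<dots> = (\<Sum>x\<in>SP xs. \<Sum>y\<in>SP (fst x). a (fst y) * b (snd y) * c (snd x))"
    by (simp add: case_prod_unfold)
  also have "\<dots> = (\<Sum>p\<in>Sigma (SP xs) (\<lambda>x. SP (fst x)). a (fst (snd p)) * b (snd (snd p)) * c (snd (fst p)))"
    by (subst sum.Sigma) (simp_all add: finite_SP case_prod_unfold)
  also have "\<dots> = (\<Sum>p\<in>Sigma (SP xs) (\<lambda>x. SP (snd x)). a (fst (fst p)) * (b (fst (snd p)) * c (snd (snd p))))"
    by (rule sum.reindex_bij_witness[where i="\<lambda>((u1,v),(u2,w)). ((u1 @ u2, w), (u1, u2))"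
          and j="\<lambda>((u,w),(u1,u2)). ((u1, u2 @ w), (u2, w))"]) (auto simp: SP_def mult.assoc)
  also have "\<dots> = (\<Sum>x\<in>SP xs. \<Sum>y\<in>SP (snd x). a (fst x) * (b (fst y) * c (snd y)))"
    by (subst sum.Sigma) (simp_all add: finite_SP case_prod_unfold)
  also have "\<dots> = (\<Sum>(u1,v)\<in>SP xs. (\<Sum>(u2,w)\<in>SP v. a u1 * (b u2 * c w)))"
    by (simp add: case_prod_unfold)
  also have "\<dots> = (\<Sum>(u1,v)\<in>SP xs. a u1 * (\<Sum>(u2,w)\<in>SP v. b u2 * c w))"
    by (simp add: sum_distrib_left case_prod_unfold)
  also have "\<dots> = mprod a (mprod b c) xs"
    unfolding mprod_SP ..
  finally show "mprod (mprod a b) c xs = mprod a (mprod b c) xs" .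
qed

lemma mprod_mone_left[simp]: "mprod mone a = a"
proof
  fix xs :: "'a list"
  have "mprod mone a xs = (\<Sum>k\<in>{0..length xs}. if k = 0 then a xs else 0)"
    unfolding mprod_def mone_def by (rule sum.cong) auto
  then show "mprod mone a xs = a xs" by simp
qed

lemma mprod_mone_right[simp]: "mprod a mone = a"
proof
  fix xs :: "'a list"
  have "mprod a mone xs = (\<Sum>k\<in>{0..length xs}. if k = length xs then a xs else 0)"
    unfolding mprod_def mone_def by (rule sum.cong) auto
  then show "mprod a mone xs = a xs" by simp
qed

lemma mprod_Nil[simp]: "mprod a b [] = a [] * b []"
  unfolding mprod_def by simp

lemma mI_mprod_Cons[simp]: "mprod mI F (x # xs) = x * F xs"
proof -
  have "mprod mI F (x # xs) = (\<Sum>k\<in>{0..Suc (length xs)}. if k = 1 then x * F xs else 0)"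
    unfolding mprod_def mI_def by (rule sum.cong) auto
  then show ?thesis by (simp only: sum.delta[OF finite_atLeastAtMost]) simp
qed

lemma mI_Nil[simp]: "mI [] = 0" unfolding mI_def by simp

lemma mI_mprod_Nil: "mprod mI F [] = 0" by simp

lemma mprod_mI_nonempty: "xs \<noteq> [] \<Longrightarrow> mprod F mI xs = F (butlast xs) * last xs"
proof -
  assume ne: "xs \<noteq> []"
  have "mprod F mI xs = (\<Sum>k\<in>{0..length xs}. if k = length xs - 1 then F (butlast xs) * last xs else 0)"
    unfolding mprod_def mI_def
  proof (rule sum.cong)
    fix k assume k: "k \<in> {0..length xs}"
    show "F (take k xs) * (if length (drop k xs) = 1 then hd (drop k xs) else 0) =
      (if k = length xs - 1 then F (butlast xs) * last xs else 0)"
    proof (cases "k = length xs - 1")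
      case True
      then have "drop k xs = [last xs]" using ne
        by (metis append_butlast_last_id append_eq_conv_conj length_butlast)
      moreover have "take k xs = butlast xs" using True by (simp add: butlast_conv_take)
      ultimately show ?thesis using True by simp
    next
      case False
      then have "length (drop k xs) \<noteq> 1" using k ne by auto
      then show ?thesis using False by simp
    qed
  qed simp
  then show ?thesis using ne by (simp only: sum.delta[OF finite_atLeastAtMost]) simp
qed

lemma mI_cancel:
  assumes "mprod mI A = mprod mI B" shows "A = B"
proof
  fix xs
  have "mprod mI A (1 # xs) = mprod mI B (1 # xs)" using assms by simp
  then show "A xs = B xs" by simp
qed

lemma mprod_add_right: "mprod a (\<lambda>xs. b xs + c xs) = (\<lambda>xs. mprod a b xs + mprod a c xs)"
  unfolding mprod_def by (simp add: distrib_left sum.distrib)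


lemma blocks_map: "blocks (map c xs) = map (map (map c)) (blocks xs)"
proof (induction xs rule: blocks.induct)
  case 1
  then show ?case by simp
next
  case (2 x xs)
  have "blocks (map c (x # xs)) = concat (map (\<lambda>k. map (\<lambda>bs. take k (map c (x # xs)) # bs) (blocks (drop k (map c (x # xs))))) [1..<length xs + 2])"
    by (simp only: list.map blocks.simps length_map)
  also have "\<dots> = concat (map (\<lambda>k. map (\<lambda>bs. take k (map c (x # xs)) # bs) (map (map (map c)) (blocks (drop k (x # xs))))) [1..<length xs + 2])"
  proof -
    have IH: "\<And>k. k \<in> set [1..<length xs + 2] \<Longrightarrow> blocks (drop k (map c (x # xs))) = map (map (map c)) (blocks (drop k (x # xs)))"
      using 2 by (simp only: drop_map)
    show ?thesis by (rule arg_cong[where f=concat], rule map_cong[OF refl]) (simp only: IH)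
  qed
  also have "\<dots> = map (map (map c)) (blocks (x # xs))"
    by (simp only: blocks.simps(2)[of x xs] map_concat map_map o_def list.map(2)[of c x xs, symmetric] take_map) (simp only: list.map(2))
  finally show ?case .
qed

lemma mcomp_map: "mcomp a b (map c ys) = (\<Sum>ds\<in>BL ys. a (map (\<lambda>d. b (map c d)) ds))"
proof -
  have "mcomp a b (map c ys) = sum_list (map (\<lambda>bs. a (map b bs)) (map (map (map c)) (blocks ys)))"
    unfolding mcomp_def blocks_map ..
  also have "\<dots> = sum_list (map (\<lambda>ds. a (map (\<lambda>d. b (map c d)) ds)) (blocks ys))"
    by (simp add: o_def)
  finally show ?thesis by (simp only: sum_list_blocks)
qed

lemma BL_Nil: "BL [] = {[]}"
proof -
  have "bs = []" if "concat bs = []" "[] \<notin> set bs" for bs :: "'a list list"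
  proof (rule ccontr)
    assume "bs \<noteq> []"
    then have "hd bs \<in> set bs" by simp
    moreover have "hd bs = []" using that(1) \<open>bs \<noteq> []\<close> concat_eq_Nil_conv by auto
    ultimately show False using that(2) by simp
  qed
  then show ?thesis unfolding BL_def by auto
qed

lemma mcomp_Nil[simp]: "mcomp a c [] = a []"
  unfolding mcomp_BL BL_Nil by simp

lemma singleton_BL: "xs \<noteq> [] \<Longrightarrow> [xs] \<in> BL xs"
  unfolding BL_def by simp

lemma BL_length1: "bs \<in> BL xs \<Longrightarrow> length bs = 1 \<longleftrightarrow> bs = [xs]"
  unfolding BL_def by (cases bs) auto

lemma mcomp_mI_left:
  assumes "c [] = 0" shows "mcomp mI c = c"
proof
  fix xs :: "'a list"
  show "mcomp mI c xs = c xs"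
  proof (cases "xs = []")
    case True
    then show ?thesis using assms by simp
  next
    case False
    have "mcomp mI c xs = (\<Sum>bs\<in>BL xs. if bs = [xs] then c xs else 0)"
      unfolding mcomp_BL
    proof (rule sum.cong)
      fix bs assume "bs \<in> BL xs"
      then show "mI (map c bs) = (if bs = [xs] then c xs else 0)"
        using BL_length1[of bs xs] unfolding mI_def by auto
    qed simp
    also have "\<dots> = c xs"
      using singleton_BL[OF False] finite_BL[of xs] by (simp add: sum.delta)
    finally show ?thesis .
  qed
qed

lemma mcomp_mone[simp]: "mcomp mone c = mone"
proof
  fix xs :: "'a list"
  have "mcomp mone c xs = (\<Sum>bs\<in>BL xs. if bs = [] then 1 else 0)"
    unfolding mcomp_BL mone_def by (rule sum.cong) auto
  also have "\<dots> = mone xs"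
    using finite_BL[of xs] unfolding mone_def by (simp add: sum.delta BL_def)
  finally show "mcomp mone c xs = mone xs" .
qed

lemma all_len1: "(\<forall>b\<in>set bs. length b = 1) \<Longrightarrow> bs = map (\<lambda>x. [x]) (concat bs)"
proof (induction bs)
  case Nil
  then show ?case by simp
next
  case (Cons b bs)
  then obtain x where "b = [x]" by (metis One_nat_def length_0_conv length_Suc_conv list.set_intros(1))
  then show ?case using Cons by simp
qed

lemma mcomp_mI_right:
  assumes a: "addall a" shows "mcomp a mI = a"
proof
  fix xs :: "'a list"
  let ?s = "map (\<lambda>x. [x]) xs"
  have s: "?s \<in> BL xs" unfolding BL_def by (induction xs) auto
  have "mcomp a mI xs = (\<Sum>bs\<in>BL xs. if bs = ?s then a xs else 0)"
    unfolding mcomp_BL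
  proof (rule sum.cong)
    fix bs assume bs: "bs \<in> BL xs"
    show "a (map mI bs) = (if bs = ?s then a xs else 0)"
    proof (cases "bs = ?s")
      case True
      then show ?thesis by (simp add: o_def mI_def)
    next
      case False
      then have "\<not> (\<forall>b\<in>set bs. length b = 1)" using all_len1[of bs] bs unfolding BL_def by auto
      then obtain i where i: "i < length bs" "length (bs ! i) \<noteq> 1" by (metis in_set_conv_nth)
      have "map mI bs = take i (map mI bs) @ mI (bs ! i) # drop (Suc i) (map mI bs)"
        using id_take_nth_drop[of i "map mI bs"] i by simp
      also have "mI (bs ! i) = 0" using i unfolding mI_def by simp
      finally have "a (map mI bs) = 0" using addall_zero[OF a] by metis
      then show ?thesis using False by simp
    qed
  qed simp
  also have "\<dots> = a xs" using s finite_BL[of xs] by (simp add: sum.delta)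
  finally show "mcomp a mI xs = a xs" .
qed

lemma mcomp_mprod: "mcomp (mprod a b) c = mprod (mcomp a c) (mcomp b c)"
proof
  fix xs :: "'a list"
  have "mcomp (mprod a b) c xs = (\<Sum>bs\<in>BL xs. \<Sum>q\<in>SP bs. a (map c (fst q)) * b (map c (snd q)))"
    unfolding mcomp_BL mprod_map by (simp add: case_prod_unfold)
  also have "\<dots> = (\<Sum>p\<in>Sigma (BL xs) SP. a (map c (fst (snd p))) * b (map c (snd (snd p))))"
    by (subst sum.Sigma) (simp_all add: finite_SP finite_BL case_prod_unfold)
  also have "\<dots> = (\<Sum>p\<in>Sigma (SP xs) (\<lambda>x. BL (fst x) \<times> BL (snd x)). a (map c (fst (snd p))) * b (map c (snd (snd p))))"
    by (rule sum.reindex_bij_witness[where i="\<lambda>(uv,(x,y)). (x @ y, (x, y))"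
          and j="\<lambda>(bs,(x,y)). ((concat x, concat y), (x, y))"]) (auto simp: SP_def BL_def)
  also have "\<dots> = (\<Sum>x\<in>SP xs. \<Sum>q\<in>BL (fst x) \<times> BL (snd x). a (map c (fst q)) * b (map c (snd q)))"
    by (subst sum.Sigma) (simp_all add: finite_SP finite_BL case_prod_unfold)
  also have "\<dots> = (\<Sum>x\<in>SP xs. mcomp a c (fst x) * mcomp b c (snd x))"
    unfolding mcomp_BL sum_product sum.cartesian_product by (simp add: case_prod_unfold)
  also have "\<dots> = mprod (mcomp a c) (mcomp b c) xs"
    unfolding mprod_SP by (simp add: case_prod_unfold)
  finally show "mcomp (mprod a b) c xs = mprod (mcomp a c) (mcomp b c) xs" .
qed

definition LA :: "('x \<Rightarrow> 'y set) \<Rightarrow> 'x list \<Rightarrow> 'y list set" where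
  "LA S bs = {ys. list_all2 (\<lambda>y b. y \<in> S b) ys bs}"

lemma LA_Nil: "LA S [] = {[]}"
  unfolding LA_def by auto

lemma LA_Cons: "LA S (b # bs) = (\<lambda>(y, ys). y # ys) ` (S b \<times> LA S bs)"
  unfolding LA_def by (auto simp: list_all2_Cons2)

lemma finite_LA: "(\<And>b. finite (S b)) \<Longrightarrow> finite (LA S bs)"
  by (induction bs) (simp_all add: LA_Nil LA_Cons)

lemma expand:
  assumes a: "addall a" and fin: "\<And>b. finite (S b)"
  shows "a (ps @ map (\<lambda>b. \<Sum>y\<in>S b. phi y) bs) = (\<Sum>ys\<in>LA S bs. a (ps @ map phi ys))"
proof (induction bs arbitrary: ps)
  case Nil
  then show ?case by (simp add: LA_Nil)
next
  case (Cons b bs)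
  have "a (ps @ map (\<lambda>b. \<Sum>y\<in>S b. phi y) (b # bs)) = a (ps @ (\<Sum>y\<in>S b. phi y) # map (\<lambda>b. \<Sum>y\<in>S b. phi y) bs)"
    by simp
  also have "\<dots> = (\<Sum>y\<in>S b. a (ps @ phi y # map (\<lambda>b. \<Sum>y\<in>S b. phi y) bs))"
    by (rule addall_sum[OF a fin])
  also have "\<dots> = (\<Sum>y\<in>S b. a ((ps @ [phi y]) @ map (\<lambda>b. \<Sum>y\<in>S b. phi y) bs))"
    by simp
  also have "\<dots> = (\<Sum>y\<in>S b. \<Sum>ys\<in>LA S bs. a ((ps @ [phi y]) @ map phi ys))"
    by (rule sum.cong[OF refl]) (rule Cons.IH)
  also have "\<dots> = (\<Sum>q\<in>S b \<times> LA S bs. a (ps @ map phi (fst q # snd q)))"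
    unfolding sum.cartesian_product by (simp add: case_prod_unfold)
  also have "\<dots> = (\<Sum>ys\<in>LA S (b # bs). a (ps @ map phi ys))"
    unfolding LA_Cons by (subst sum.reindex) (auto simp: inj_on_def case_prod_unfold)
  finally show ?case .
qed

lemma LA_BL: "ys \<in> LA BL bs \<longleftrightarrow> bs = map concat ys \<and> (\<forall>y\<in>set ys. [] \<notin> set y)"
  unfolding LA_def
proof (induction ys arbitrary: bs)
  case Nil
  then show ?case by auto
next
  case (Cons y ys)
  then show ?case by (cases bs) (auto simp: BL_def)
qed

lemma concat_ne: "[] \<notin> set d \<Longrightarrow> d \<noteq> [] \<Longrightarrow> concat d \<noteq> []"
  by (cases d) auto

lemma concat_map_concat: "concat (map concat xss) = concat (concat xss)"
  by (induction xss) simp_all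

lemma mcomp_assoc:
  assumes a: "addall a"
  shows "mcomp (mcomp a b) c = mcomp a (mcomp b c)"
proof
  fix xs :: "'a list"
  let ?t = "\<lambda>ds. a (map (\<lambda>d. b (map c d)) ds)"
  have "mcomp (mcomp a b) c xs = (\<Sum>bs\<in>BL xs. \<Sum>ds\<in>BL bs. ?t ds)"
    unfolding mcomp_BL[of "mcomp a b"] mcomp_map ..
  also have "\<dots> = (\<Sum>p\<in>Sigma (BL xs) BL. ?t (snd p))"
    by (subst sum.Sigma) (simp_all add: finite_BL case_prod_unfold)
  also have "\<dots> = (\<Sum>p\<in>Sigma (BL xs) (LA BL). ?t (snd p))"
  proof (rule sum.reindex_bij_witness[where i="\<lambda>(bs, ys). (concat ys, ys)" and j="\<lambda>(bs, ds). (map concat ds, ds)"])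
    fix p assume p: "p \<in> Sigma (BL xs) (LA BL)"
    then obtain bs ys where p': "p = (bs, ys)" "bs \<in> BL xs" "ys \<in> LA BL bs" by blast
    then have bs: "bs = map concat ys" "\<forall>y\<in>set ys. [] \<notin> set y" using LA_BL by blast+
    have ne: "\<forall>y\<in>set ys. y \<noteq> []"
    proof
      fix y assume y: "y \<in> set ys"
      have "concat y \<in> set bs" using y bs(1) by simp
      then show "y \<noteq> []" using p'(2) unfolding BL_def by auto
    qed
    show "(case (case p of (bs, ys) \<Rightarrow> (concat ys, ys)) of (bs, ds) \<Rightarrow> (map concat ds, ds)) = p"
      using p' bs by simp
    have ne': "[] \<notin> set ys" using ne by blast
    show "(case p of (bs, ys) \<Rightarrow> (concat ys, ys)) \<in> Sigma (BL xs) BL"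
      using p' bs ne' unfolding BL_def by (auto simp: concat_map_concat[symmetric])
  next
    fix p assume p: "p \<in> Sigma (BL xs) BL"
    then obtain bs ds where p': "p = (bs, ds)" "bs \<in> BL xs" "ds \<in> BL bs" by blast
    then have d: "concat ds = bs" "[] \<notin> set ds" "concat bs = xs" "[] \<notin> set bs" unfolding BL_def by auto
    have dne: "\<forall>d\<in>set ds. [] \<notin> set d" using d by auto
    have cne: "[] \<notin> set (map concat ds)" using dne d(2) concat_ne by fastforce
    show "(case (case p of (bs, ds) \<Rightarrow> (map concat ds, ds)) of (bs, ys) \<Rightarrow> (concat ys, ys)) = p"
      using p' d by simp
    show "(case p of (bs, ds) \<Rightarrow> (map concat ds, ds)) \<in> Sigma (BL xs) (LA BL)"
      using p' d dne cne LA_BL unfolding BL_def by (auto simp: concat_map_concat[symmetric])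
    show "?t (snd (case p of (bs, ds) \<Rightarrow> (map concat ds, ds))) = ?t (snd p)" using p' by simp
  qed
  also have "\<dots> = (\<Sum>bs\<in>BL xs. \<Sum>ys\<in>LA BL bs. ?t ys)"
    by (subst sum.Sigma) (simp_all add: finite_BL finite_LA case_prod_unfold)
  also have "\<dots> = (\<Sum>bs\<in>BL xs. a ([] @ map (\<lambda>bt. \<Sum>g\<in>BL bt. b (map c g)) bs))"
    by (rule sum.cong[OF refl], subst expand[OF a finite_BL]) simp
  also have "\<dots> = mcomp a (mcomp b c) xs"
    unfolding mcomp_BL[of a] mcomp_BL[of b] by simp
  finally show "mcomp (mcomp a b) c xs = mcomp a (mcomp b c) xs" .
qed

lemma BL_len: "bs \<in> BL xs \<Longrightarrow> b \<in> set bs \<Longrightarrow> b \<noteq> [] \<and> length b \<le> length xs"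
  unfolding BL_def by (auto simp: length_concat elem_le_sum_list member_le_sum_list)

lemma mcomp_local:
  assumes "\<And>ys. ys \<noteq> [] \<Longrightarrow> length ys \<le> length xs \<Longrightarrow> c ys = c' ys"
  shows "mcomp a c xs = mcomp a c' xs"
  unfolding mcomp_BL
proof (rule sum.cong[OF refl])
  fix bs assume bs: "bs \<in> BL xs"
  have "map c bs = map c' bs" using BL_len[OF bs] assms by (simp add: map_eq_conv)
  then show "a (map c bs) = a (map c' bs)" by (rule arg_cong)
qed

lemma mprod_local:
  assumes "\<And>ys. length ys \<le> length xs \<Longrightarrow> a ys = a' ys"
    and "\<And>ys. length ys \<le> length xs \<Longrightarrow> b ys = b' ys"
  shows "mprod a b xs = mprod a' b' xs"
  unfolding mprod_def using assms by (intro sum.cong) auto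


section \<open>Multilinearity closure\<close>

context
  fixes sc :: "'k::field_char_0 \<Rightarrow> 'b::ring_1 \<Rightarrow> 'b"
  assumes alg: "algebra_over sc"
begin

lemma md: "module sc" using alg unfolding algebra_over_def by blast

lemma sc_mult_left: "sc c x * y = sc c (x * y)" using alg unfolding algebra_over_def by metis
lemma sc_mult_right: "x * sc c y = sc c (x * y)" using alg unfolding algebra_over_def by metis
lemma sc_sum: "sc c (sum f A) = (\<Sum>i\<in>A. sc c (f i))" using module.scale_sum_right[OF md] .
lemma sc_add: "sc c (x + y) = sc c x + sc c y" using module.scale_right_distrib[OF md] .
lemma sc_neg: "sc c (- x) = - sc c x" using module.scale_minus_right[OF md] .
lemma sc_zero: "sc c 0 = 0" using module.scale_zero_right[OF md] .
lemma sc_diff: "sc c (x - y) = sc c x - sc c y" using module.scale_right_diff_distrib[OF md] .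

lemma lin_at_mult_left: "lin_at sc H ps ss \<Longrightarrow> lin_at sc (\<lambda>xs. u * H xs) ps ss"
  unfolding lin_at_def by (simp add: distrib_left sc_mult_right)

lemma lin_at_mult_right: "lin_at sc H ps ss \<Longrightarrow> lin_at sc (\<lambda>xs. H xs * u) ps ss"
  unfolding lin_at_def by (simp add: distrib_right sc_mult_left)

lemma lin_at_add: "lin_at sc H ps ss \<Longrightarrow> lin_at sc G ps ss \<Longrightarrow> lin_at sc (\<lambda>xs. H xs + G xs) ps ss"
  unfolding lin_at_def by (simp add: sc_add algebra_simps)

lemma lin_at_neg: "lin_at sc H ps ss \<Longrightarrow> lin_at sc (\<lambda>xs. - H xs) ps ss"
  unfolding lin_at_def by (simp add: sc_neg algebra_simps)

lemma lin_at_zero: "lin_at sc (\<lambda>xs. 0) ps ss"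
  unfolding lin_at_def by (simp add: sc_zero)

lemma lin_at_sum: "finite A \<Longrightarrow> (\<And>i. i \<in> A \<Longrightarrow> lin_at sc (H i) ps ss) \<Longrightarrow> lin_at sc (\<lambda>xs. \<Sum>i\<in>A. H i xs) ps ss"
proof (induction A rule: finite_induct)
  case empty
  then show ?case using lin_at_zero by simp
next
  case (insert x F)
  then show ?case using lin_at_add[of "H x" ps ss "\<lambda>xs. \<Sum>i\<in>F. H i xs"] by simp
qed

lemma lin_at_comp:
  assumes "lin_at sc a qs rs" "lin_at sc c ps' ss'"
  shows "lin_at sc (\<lambda>xs. a (qs @ c (ps' @ xs) # rs)) [] ss'"
  using assms unfolding lin_at_def by simp

lemma ml_mI: "ml sc mI n"
  unfolding ml_def lin_at_def mI_def by (auto simp: sc_zero)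

lemma ml_mone: "ml sc mone n"
  unfolding ml_def lin_at_def mone_def by (auto simp: sc_zero)

lemma ml_zero_len: "ml sc H 0"
  unfolding ml_def by simp

lemma ml_mult_left: "ml sc H n \<Longrightarrow> ml sc (\<lambda>xs. u * H xs) n"
  unfolding ml_def using lin_at_mult_left by blast

lemma ml_add: "ml sc H n \<Longrightarrow> ml sc G n \<Longrightarrow> ml sc (\<lambda>xs. H xs + G xs) n"
  unfolding ml_def using lin_at_add by blast

lemma ml_neg: "ml sc H n \<Longrightarrow> ml sc (\<lambda>xs. - H xs) n"
  unfolding ml_def using lin_at_neg by blast

lemma mprod_split:
  "mprod a b (ps @ y # ss) =
    (\<Sum>k=0..length ps. a (take k ps) * b (drop k ps @ y # ss)) +
    (\<Sum>j=0..length ss. a (ps @ y # take j ss) * b (drop j ss))"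
proof -
  have "mprod a b (ps @ y # ss) = (\<Sum>k=0..length ps + (length ss + 1). a (take k (ps @ y # ss)) * b (drop k (ps @ y # ss)))"
    unfolding mprod_def by (simp add: add.assoc)
  also have "\<dots> = (\<Sum>k=0..length ps. a (take k (ps @ y # ss)) * b (drop k (ps @ y # ss))) +
       (\<Sum>k=length ps + 1..length ps + (length ss + 1). a (take k (ps @ y # ss)) * b (drop k (ps @ y # ss)))"
    by (rule sum.ub_add_nat) simp
  also have "(\<Sum>k=0..length ps. a (take k (ps @ y # ss)) * b (drop k (ps @ y # ss))) =
      (\<Sum>k=0..length ps. a (take k ps) * b (drop k ps @ y # ss))"
    by (rule sum.cong) auto
  also have "(\<Sum>k=length ps + 1..length ps + (length ss + 1). a (take k (ps @ y # ss)) * b (drop k (ps @ y # ss))) =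
      (\<Sum>j=0..length ss. a (take (j + (length ps + 1)) (ps @ y # ss)) * b (drop (j + (length ps + 1)) (ps @ y # ss)))"
    using sum.shift_bounds_cl_nat_ivl[of "\<lambda>k. a (take k (ps @ y # ss)) * b (drop k (ps @ y # ss))" 0 "length ps + 1" "length ss"]
    by (simp add: add.commute)
  also have "\<dots> = (\<Sum>j=0..length ss. a (ps @ y # take j ss) * b (drop j ss))"
    by (rule sum.cong) auto
  finally show ?thesis .
qed

lemma mprod_lin_at:
  assumes "\<And>k. k \<le> length ps \<Longrightarrow> a (take k ps) = 0 \<or> lin_at sc b (drop k ps) ss"
    and "\<And>j. j \<le> length ss \<Longrightarrow> b (drop j ss) = 0 \<or> lin_at sc a ps (take j ss)"
  shows "lin_at sc (mprod a b) ps ss"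
proof -
  have e: "mprod a b = (\<lambda>xs. mprod a b xs)" by simp
  have l1: "lin_at sc (\<lambda>xs. \<Sum>k=0..length ps. a (take k ps) * b (drop k ps @ drop (length ps) xs)) ps ss"
  proof (rule lin_at_sum)
    fix k assume k: "k \<in> {0..length ps}"
    show "lin_at sc (\<lambda>xs. a (take k ps) * b (drop k ps @ drop (length ps) xs)) ps ss"
    proof (cases "a (take k ps) = 0")
      case True
      then show ?thesis using lin_at_zero by simp
    next
      case False
      then have "lin_at sc b (drop k ps) ss" using assms(1) k by auto
      then have "lin_at sc (\<lambda>xs. b (drop k ps @ drop (length ps) xs)) ps ss" unfolding lin_at_def by simp
      then show ?thesis by (rule lin_at_mult_left)
    qed
  qed simp
  have l2: "lin_at sc (\<lambda>xs. \<Sum>j=0..length ss. a (take (length ps + 1 + j) xs) * b (drop j ss)) ps ss"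
  proof (rule lin_at_sum)
    fix j assume j: "j \<in> {0..length ss}"
    show "lin_at sc (\<lambda>xs. a (take (length ps + 1 + j) xs) * b (drop j ss)) ps ss"
    proof (cases "b (drop j ss) = 0")
      case True
      then show ?thesis using lin_at_zero by simp
    next
      case False
      have "lin_at sc a ps (take j ss)" using assms(2) j False by auto
      then have "lin_at sc (\<lambda>xs. a (take (length ps + 1 + j) xs)) ps ss" unfolding lin_at_def by simp
      then show ?thesis by (rule lin_at_mult_right)
    qed
  qed simp
  have "lin_at sc (\<lambda>xs. (\<Sum>k=0..length ps. a (take k ps) * b (drop k ps @ drop (length ps) xs)) +
           (\<Sum>j=0..length ss. a (take (length ps + 1 + j) xs) * b (drop j ss))) ps ss"
    by (rule lin_at_add[OF l1 l2])
  then show ?thesis unfolding lin_at_def mprod_split by simp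
qed

lemma ml_mprod:
  assumes "\<And>m. m \<le> n \<Longrightarrow> ml sc a m" "\<And>m. m \<le> n \<Longrightarrow> ml sc b m"
  shows "ml sc (mprod a b) n"
  unfolding ml_def
proof (intro allI impI)
  fix ps ss :: "'b list" assume l: "length ps + length ss + 1 = n"
  show "lin_at sc (mprod a b) ps ss"
  proof (rule mprod_lin_at)
    fix k assume k: "k \<le> length ps"
    have "ml sc b (length (drop k ps) + length ss + 1)" using assms(2) l k by simp
    then show "a (take k ps) = 0 \<or> lin_at sc b (drop k ps) ss" using ml_lin_at by blast
  next
    fix j assume j: "j \<le> length ss"
    have "ml sc a (length ps + length (take j ss) + 1)" using assms(1) l j by simp
    then show "b (drop j ss) = 0 \<or> lin_at sc a ps (take j ss)" using ml_lin_at by blast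
  qed
qed

lemma ml_mprod0:
  assumes "a [] = 0" "\<And>m. m \<le> n \<Longrightarrow> ml sc a m" "\<And>m. m < n \<Longrightarrow> ml sc b m"
  shows "ml sc (mprod a b) n"
  unfolding ml_def
proof (intro allI impI)
  fix ps ss :: "'b list" assume l: "length ps + length ss + 1 = n"
  show "lin_at sc (mprod a b) ps ss"
  proof (rule mprod_lin_at)
    fix k assume k: "k \<le> length ps"
    show "a (take k ps) = 0 \<or> lin_at sc b (drop k ps) ss"
    proof (cases "k = 0")
      case True
      then show ?thesis using assms(1) by simp
    next
      case False
      have "ml sc b (length (drop k ps) + length ss + 1)" using assms(3) l k False by simp
      then show ?thesis using ml_lin_at by blast
    qed
  next
    fix j assume j: "j \<le> length ss"
    have "ml sc a (length ps + length (take j ss) + 1)" using assms(2) l j by simp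
    then show "b (drop j ss) = 0 \<or> lin_at sc a ps (take j ss)" using ml_lin_at by blast
  qed
qed

lemma ml_mprod0':
  assumes "b [] = 0" "\<And>m. m < n \<Longrightarrow> ml sc a m" "\<And>m. m \<le> n \<Longrightarrow> ml sc b m"
  shows "ml sc (mprod a b) n"
  unfolding ml_def
proof (intro allI impI)
  fix ps ss :: "'b list" assume l: "length ps + length ss + 1 = n"
  show "lin_at sc (mprod a b) ps ss"
  proof (rule mprod_lin_at)
    fix k assume k: "k \<le> length ps"
    have "ml sc b (length (drop k ps) + length ss + 1)" using assms(3) l k by simp
    then show "a (take k ps) = 0 \<or> lin_at sc b (drop k ps) ss" using ml_lin_at by blast
  next
    fix j assume j: "j \<le> length ss"
    show "b (drop j ss) = 0 \<or> lin_at sc a ps (take j ss)"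
    proof (cases "j = length ss")
      case True
      then show ?thesis using assms(1) by simp
    next
      case False
      have "ml sc a (length ps + length (take j ss) + 1)" using assms(2) l j False by simp
      then show ?thesis using ml_lin_at by blast
    qed
  qed
qed

end


fun cutl :: "nat list \<Rightarrow> 'a list \<Rightarrow> 'a list list" where
  "cutl [] xs = []"
| "cutl (l # ls) xs = take l xs # cutl ls (drop l xs)"

definition CO :: "nat \<Rightarrow> nat list set" where
  "CO n = {ls. sum_list ls = n \<and> 0 \<notin> set ls}"

lemma cut_map_length: "concat bs = xs \<Longrightarrow> cutl (map length bs) xs = bs"
  by (induction bs arbitrary: xs) auto

lemma map_length_cut: "sum_list ls \<le> length xs \<Longrightarrow> map length (cutl ls xs) = ls"
  by (induction ls arbitrary: xs) auto

lemma cut_BL: "ls \<in> CO (length xs) \<Longrightarrow> cutl ls xs \<in> BL xs"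
proof (induction ls arbitrary: xs)
  case Nil
  then show ?case unfolding CO_def BL_def by simp
next
  case (Cons l ls)
  then have l: "0 < l" "l + sum_list ls = length xs" "0 \<notin> set ls" unfolding CO_def by auto
  then have "ls \<in> CO (length (drop l xs))" unfolding CO_def by simp
  then have "cutl ls (drop l xs) \<in> BL (drop l xs)" by (rule Cons.IH)
  moreover have "take l xs \<noteq> []" using l by auto
  ultimately show ?case unfolding BL_def by simp
qed

lemma map_length_BL: "bs \<in> BL xs \<Longrightarrow> map length bs \<in> CO (length xs)"
  unfolding BL_def CO_def by (auto simp: length_concat)

lemma BL_CO: "BL xs = (\<lambda>ls. cutl ls xs) ` CO (length xs)"
proof
  show "BL xs \<subseteq> (\<lambda>ls. cutl ls xs) ` CO (length xs)"
  proof
    fix bs assume bs: "bs \<in> BL xs"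
    then have "bs = cutl (map length bs) xs" using cut_map_length[of bs xs] unfolding BL_def by simp
    then show "bs \<in> (\<lambda>ls. cutl ls xs) ` CO (length xs)" using map_length_BL[OF bs] by blast
  qed
  show "(\<lambda>ls. cutl ls xs) ` CO (length xs) \<subseteq> BL xs" using cut_BL by blast
qed

lemma inj_cut: "inj_on (\<lambda>ls. cutl ls xs) (CO (length xs))"
proof (rule inj_onI)
  fix ls ls' assume h: "ls \<in> CO (length xs)" "ls' \<in> CO (length xs)" "cutl ls xs = cutl ls' xs"
  have s1: "sum_list ls \<le> length xs" using h(1) unfolding CO_def by simp
  have s2: "sum_list ls' \<le> length xs" using h(2) unfolding CO_def by simp
  have "ls = map length (cutl ls xs)" using map_length_cut[OF s1] by (rule sym)
  also have "\<dots> = map length (cutl ls' xs)" using h(3) by (rule arg_cong)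
  also have "\<dots> = ls'" using map_length_cut[OF s2] .
  finally show "ls = ls'" .
qed

lemma finite_CO: "finite (CO n)"
proof -
  have "CO n \<subseteq> map length ` BL (replicate n (0::nat))"
  proof
    fix ls assume ls: "ls \<in> CO n"
    then have "cutl ls (replicate n (0::nat)) \<in> BL (replicate n 0)" using cut_BL[of ls "replicate n (0::nat)"] by simp
    moreover have "map length (cutl ls (replicate n (0::nat))) = ls" using map_length_cut[of ls "replicate n (0::nat)"] ls unfolding CO_def by simp
    ultimately show "ls \<in> map length ` BL (replicate n (0::nat))" by (metis image_eqI)
  qed
  then show ?thesis using finite_BL finite_subset by blast
qed

lemma mcomp_CO: "mcomp a c xs = (\<Sum>ls\<in>CO (length xs). a (map c (cutl ls xs)))"
  unfolding mcomp_BL BL_CO by (subst sum.reindex[OF inj_cut]) simp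

lemma cut_decomp:
  "ls \<in> CO (length ps + length ss + 1) \<Longrightarrow>
    \<exists>qs ps' ss' rs. (\<forall>y. cutl ls (ps @ y # ss) = qs @ (ps' @ y # ss') # rs) \<and>
       length ps' + length ss' + 1 \<le> length ps + length ss + 1"
proof (induction ls arbitrary: ps)
  case Nil
  then show ?case unfolding CO_def by simp
next
  case (Cons l ls)
  then have l: "0 < l" "l + sum_list ls = length ps + length ss + 1" "0 \<notin> set ls" unfolding CO_def by auto
  show ?case
  proof (cases "length ps < l")
    case True
    let ?j = "l - length ps - 1"
    have t: "\<And>y. take l (ps @ y # ss) = ps @ y # take ?j ss" using True
      by (simp add: take_Cons')
    have d: "\<And>y. drop l (ps @ y # ss) = drop ?j ss" using True
      by (simp add: drop_Cons')
    have "\<forall>y. cutl (l # ls) (ps @ y # ss) = [] @ (ps @ y # take ?j ss) # cutl ls (drop ?j ss)"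
      using t d by simp
    moreover have "length ps + length (take ?j ss) + 1 \<le> length ps + length ss + 1" by simp
    ultimately show ?thesis by blast
  next
    case False
    have t: "\<And>y. take l (ps @ y # ss) = take l ps" using False by simp
    have d: "\<And>y. drop l (ps @ y # ss) = drop l ps @ y # ss" using False by simp
    have "ls \<in> CO (length (drop l ps) + length ss + 1)" using l False unfolding CO_def by simp
    from Cons.IH[OF this] obtain qs ps' ss' rs where
      h: "\<forall>y. cutl ls (drop l ps @ y # ss) = qs @ (ps' @ y # ss') # rs"
        "length ps' + length ss' + 1 \<le> length (drop l ps) + length ss + 1" by blast
    have "\<forall>y. cutl (l # ls) (ps @ y # ss) = (take l ps # qs) @ (ps' @ y # ss') # rs"
      using t d h(1) by simp
    moreover have "length ps' + length ss' + 1 \<le> length ps + length ss + 1" using h(2) by simp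
    ultimately show ?thesis by blast
  qed
qed

lemma lin_at_cong: "(\<And>z. H (ps @ z # ss) = G (ps @ z # ss)) \<Longrightarrow> lin_at sc H ps ss \<longleftrightarrow> lin_at sc G ps ss"
  unfolding lin_at_def by simp

context
  fixes sc :: "'k::field_char_0 \<Rightarrow> 'b::ring_1 \<Rightarrow> 'b"
  assumes alg: "algebra_over sc"
begin

lemma ml_mcomp:
  assumes a: "\<And>m. ml sc a m" and c: "\<And>m. 0 < m \<Longrightarrow> m \<le> n \<Longrightarrow> ml sc c m"
  shows "ml sc (mcomp a c) n"
  unfolding ml_def
proof (intro allI impI)
  fix ps ss :: "'b list" assume l: "length ps + length ss + 1 = n"
  have "lin_at sc (\<lambda>xs. \<Sum>ls\<in>CO n. a (map c (cutl ls xs))) ps ss"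
  proof (rule lin_at_sum[OF alg finite_CO])
    fix ls assume ls: "ls \<in> CO n"
    then obtain qs ps' ss' rs where
      h: "\<forall>y. cutl ls (ps @ y # ss) = qs @ (ps' @ y # ss') # rs"
        "length ps' + length ss' + 1 \<le> length ps + length ss + 1"
      using cut_decomp[of ls ps ss] l by blast
    have lc: "lin_at sc c ps' ss'" using c[of "length ps' + length ss' + 1"] h(2) l ml_lin_at by simp
    have la: "lin_at sc a (map c qs) (map c rs)" using a ml_lin_at by blast
    have "lin_at sc (\<lambda>xs. a (map c qs @ c (ps' @ (xs ! length ps) # ss') # map c rs)) ps ss"
      using la lc unfolding lin_at_def by simp
    then show "lin_at sc (\<lambda>xs. a (map c (cutl ls xs))) ps ss"
      by (subst lin_at_cong[where G="\<lambda>xs. a (map c qs @ c (ps' @ (xs ! length ps) # ss') # map c rs)"])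
        (simp_all add: h(1))
  qed
  then show "lin_at sc (mcomp a c) ps ss"
    by (subst lin_at_cong[where G="\<lambda>xs. \<Sum>ls\<in>CO n. a (map c (cutl ls xs))"])
      (simp_all add: mcomp_CO l[symmetric])
qed

end


section \<open>Fixed points of local operators\<close>

definition local_op :: "(('a list \<Rightarrow> 'b) \<Rightarrow> 'a list \<Rightarrow> 'b) \<Rightarrow> bool" where
  "local_op Phi \<longleftrightarrow> (\<forall>s t xs. (\<forall>ys. length ys < length xs \<longrightarrow> s ys = t ys) \<longrightarrow> Phi s xs = Phi t xs)"

lemma fix_exists:
  fixes Phi :: "('a list \<Rightarrow> 'b::zero) \<Rightarrow> 'a list \<Rightarrow> 'b"
  assumes loc: "local_op Phi" shows "\<exists>s. Phi s = s"
proof -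
  define it where "it k = (Phi ^^ k) (\<lambda>_. 0)" for k
  have itS: "it (Suc k) = Phi (it k)" for k unfolding it_def by simp
  have c1: "\<forall>xs. length xs < k \<longrightarrow> it (Suc k) xs = it k xs" for k
  proof (induction k)
    case 0
    then show ?case by simp
  next
    case (Suc k)
    show ?case
    proof (intro allI impI)
      fix xs :: "'a list" assume l: "length xs < Suc k"
      have "\<forall>ys. length ys < length xs \<longrightarrow> it (Suc k) ys = it k ys"
      proof (intro allI impI)
        fix ys :: "'a list" assume "length ys < length xs"
        then have "length ys < k" using l by simp
        then show "it (Suc k) ys = it k ys" using Suc.IH by blast
      qed
      then have "Phi (it (Suc k)) xs = Phi (it k) xs" using loc unfolding local_op_def by blast
      then show "it (Suc (Suc k)) xs = it (Suc k) xs" unfolding itS .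
    qed
  qed
  have c2: "it j xs = it k xs" if "length xs < k" "k \<le> j" for xs k j
    using that(2)
  proof (induction j rule: dec_induct)
    case base
    then show ?case by simp
  next
    case (step j)
    have "length xs < j" using that(1) step(1) by simp
    then have "it (Suc j) xs = it j xs" using c1 by blast
    then show ?case using step(3) by simp
  qed
  define s where "s xs = it (Suc (length xs)) xs" for xs
  have "Phi s xs = s xs" for xs
  proof -
    have "\<forall>ys. length ys < length xs \<longrightarrow> s ys = it (length xs) ys"
    proof (intro allI impI)
      fix ys :: "'a list" assume "length ys < length xs"
      then show "s ys = it (length xs) ys" unfolding s_def using c2[of ys "Suc (length ys)" "length xs"] by simp
    qed
    then have "Phi s xs = Phi (it (length xs)) xs" using loc unfolding local_op_def by blast
    also have "\<dots> = s xs" unfolding s_def itS ..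
    finally show ?thesis .
  qed
  then show ?thesis by blast
qed

lemma fix_some: assumes "local_op Phi" shows "Phi (SOME s. Phi s = (s :: 'a list \<Rightarrow> 'b::zero)) = (SOME s. Phi s = s)"
  using fix_exists[OF assms] by (rule someI_ex)

section \<open>Multiplicative inverses\<close>

definition uinv :: "'b::ring_1 \<Rightarrow> 'b" where
  "uinv u = (SOME w. u * w = 1 \<and> w * u = 1)"

lemma uinv: "is_unit_ring u \<Longrightarrow> u * uinv u = 1 \<and> uinv u * u = 1"
  unfolding is_unit_ring_def uinv_def by (rule someI_ex)

lemma uinv_unit: "is_unit_ring u \<Longrightarrow> is_unit_ring (uinv u)"
  using uinv unfolding is_unit_ring_def by blast

lemma unit_mult: "is_unit_ring u \<Longrightarrow> is_unit_ring v \<Longrightarrow> is_unit_ring (u * v)"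
proof -
  assume "is_unit_ring u" "is_unit_ring v"
  then obtain u' v' where "u * u' = 1" "u' * u = 1" "v * v' = 1" "v' * v = 1" unfolding is_unit_ring_def by blast
  then have "(u * v) * (v' * u') = 1" "(v' * u') * (u * v) = 1"
    by (simp_all add: mult.assoc) (metis mult.assoc mult_1_left)+
  then show ?thesis unfolding is_unit_ring_def by blast
qed

definition trz :: "('b::ring_1 list \<Rightarrow> 'b) \<Rightarrow> 'b list \<Rightarrow> 'b" where
  "trz A xs = (if xs = [] then 0 else A xs)"

definition PhiR :: "('b::ring_1 list \<Rightarrow> 'b) \<Rightarrow> ('b list \<Rightarrow> 'b) \<Rightarrow> 'b list \<Rightarrow> 'b" where
  "PhiR A s xs = (if xs = [] then uinv (A []) else - (uinv (A []) * mprod (trz A) s xs))"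

definition PhiL :: "('b::ring_1 list \<Rightarrow> 'b) \<Rightarrow> ('b list \<Rightarrow> 'b) \<Rightarrow> 'b list \<Rightarrow> 'b" where
  "PhiL A s xs = (if xs = [] then uinv (A []) else - (mprod s (trz A) xs * uinv (A [])))"

definition rinv :: "('b::ring_1 list \<Rightarrow> 'b) \<Rightarrow> 'b list \<Rightarrow> 'b" where
  "rinv A = (SOME s. PhiR A s = s)"

definition linv :: "('b::ring_1 list \<Rightarrow> 'b) \<Rightarrow> 'b list \<Rightarrow> 'b" where
  "linv A = (SOME s. PhiL A s = s)"

lemma mprod_trz_left: "mprod A s xs = A [] * s xs + mprod (trz A) s xs"
proof -
  have "mprod A s xs = (\<Sum>k=0..length xs. (if k = 0 then A [] * s xs else 0) + trz A (take k xs) * s (drop k xs))"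
    unfolding mprod_def by (rule sum.cong) (auto simp: trz_def)
  also have "\<dots> = A [] * s xs + mprod (trz A) s xs"
    unfolding sum.distrib mprod_def by simp
  finally show ?thesis .
qed

lemma mprod_trz_right: "mprod s A xs = s xs * A [] + mprod s (trz A) xs"
proof -
  have "mprod s A xs = (\<Sum>k=0..length xs. (if k = length xs then s xs * A [] else 0) + s (take k xs) * trz A (drop k xs))"
    unfolding mprod_def by (rule sum.cong) (auto simp: trz_def)
  also have "\<dots> = s xs * A [] + mprod s (trz A) xs"
    unfolding sum.distrib mprod_def by simp
  finally show ?thesis .
qed

lemma local_PhiR: "local_op (PhiR A)"
  unfolding local_op_def
proof (intro allI impI)
  fix s t :: "'a list \<Rightarrow> 'a" and xs :: "'a list"
  assume h: "\<forall>ys. length ys < length xs \<longrightarrow> s ys = t ys"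
  have "mprod (trz A) s xs = mprod (trz A) t xs"
    unfolding mprod_def
  proof (rule sum.cong[OF refl])
    fix k assume k: "k \<in> {0..length xs}"
    show "trz A (take k xs) * s (drop k xs) = trz A (take k xs) * t (drop k xs)"
    proof (cases "k = 0")
      case True
      then show ?thesis by (simp add: trz_def)
    next
      case False
      then have "length (drop k xs) < length xs" using k by auto
      then show ?thesis using h by simp
    qed
  qed
  then show "PhiR A s xs = PhiR A t xs" unfolding PhiR_def by simp
qed

lemma local_PhiL: "local_op (PhiL A)"
  unfolding local_op_def
proof (intro allI impI)
  fix s t :: "'a list \<Rightarrow> 'a" and xs :: "'a list"
  assume h: "\<forall>ys. length ys < length xs \<longrightarrow> s ys = t ys"
  have "mprod s (trz A) xs = mprod t (trz A) xs"
    unfolding mprod_def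
  proof (rule sum.cong[OF refl])
    fix k assume k: "k \<in> {0..length xs}"
    show "s (take k xs) * trz A (drop k xs) = t (take k xs) * trz A (drop k xs)"
    proof (cases "k = length xs")
      case True
      then show ?thesis by (simp add: trz_def)
    next
      case False
      then have "length (take k xs) < length xs" using k by auto
      then show ?thesis using h by simp
    qed
  qed
  then show "PhiL A s xs = PhiL A t xs" unfolding PhiL_def by simp
qed

lemma rinv_eq: "PhiR A (rinv A) = rinv A"
  unfolding rinv_def by (rule fix_some[OF local_PhiR])

lemma linv_eq: "PhiL A (linv A) = linv A"
  unfolding linv_def by (rule fix_some[OF local_PhiL])

lemma rinv_unfold: "rinv A xs = PhiR A (rinv A) xs"
  by (simp only: rinv_eq)

lemma linv_unfold: "linv A xs = PhiL A (linv A) xs"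
  by (simp only: linv_eq)

lemma rinv_right:
  assumes u: "is_unit_ring (A [])" shows "mprod A (rinv A) = mone"
proof
  fix xs :: "'a list"
  have e: "rinv A xs = PhiR A (rinv A) xs" by (rule rinv_unfold)
  show "mprod A (rinv A) xs = mone xs"
  proof (cases "xs = []")
    case True
    then show ?thesis using uinv[OF u] e unfolding PhiR_def mone_def by simp
  next
    case False
    have "mprod A (rinv A) xs = A [] * rinv A xs + mprod (trz A) (rinv A) xs" by (rule mprod_trz_left)
    also have "A [] * rinv A xs = - (A [] * uinv (A []) * mprod (trz A) (rinv A) xs)"
      using e False unfolding PhiR_def by (simp add: mult.assoc)
    finally show ?thesis using uinv[OF u] False unfolding mone_def by simp
  qed
qed

lemma linv_left:
  assumes u: "is_unit_ring (A [])" shows "mprod (linv A) A = mone"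
proof
  fix xs :: "'a list"
  have e: "linv A xs = PhiL A (linv A) xs" by (rule linv_unfold)
  show "mprod (linv A) A xs = mone xs"
  proof (cases "xs = []")
    case True
    then show ?thesis using uinv[OF u] e unfolding PhiL_def mone_def by simp
  next
    case False
    have "mprod (linv A) A xs = linv A xs * A [] + mprod (linv A) (trz A) xs" by (rule mprod_trz_right)
    also have "linv A xs * A [] = - (mprod (linv A) (trz A) xs * (uinv (A []) * A []))"
      using e False unfolding PhiL_def by (simp add: mult.assoc)
    finally show ?thesis using uinv[OF u] False unfolding mone_def by simp
  qed
qed

lemma linv_rinv: assumes u: "is_unit_ring (A [])" shows "linv A = rinv A"
proof -
  have "linv A = mprod (linv A) (mprod A (rinv A))" using rinv_right[of A, OF u] by simp
  also have "\<dots> = mprod (mprod (linv A) A) (rinv A)" by (simp add: mprod_assoc)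
  also have "\<dots> = rinv A" using linv_left[of A, OF u] by simp
  finally show ?thesis .
qed

lemma rinv_left: assumes u: "is_unit_ring (A [])" shows "mprod (rinv A) A = mone"
  using linv_left[of A, OF u] linv_rinv[of A, OF u] by simp

lemma inv_unique_right:
  assumes u: "is_unit_ring (A [])" and "mprod A B = mone" shows "B = rinv A"
proof -
  have "B = mprod (mprod (rinv A) A) B" using rinv_left[of A, OF u] by simp
  also have "\<dots> = mprod (rinv A) (mprod A B)" by (simp add: mprod_assoc)
  also have "\<dots> = rinv A" using assms(2) by simp
  finally show ?thesis .
qed

lemma inv_unique_left:
  assumes u: "is_unit_ring (A [])" and "mprod B A = mone" shows "B = rinv A"
proof -
  have "B = mprod B (mprod A (rinv A))" using rinv_right[of A, OF u] by simp
  also have "\<dots> = mprod (mprod B A) (rinv A)" by (simp add: mprod_assoc)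
  also have "\<dots> = rinv A" using assms(2) by simp
  finally show ?thesis .
qed

lemma rinv_Nil: "rinv A [] = uinv (A [])"
  by (subst rinv_unfold) (simp add: PhiR_def)

lemma rinv_local:
  assumes "\<And>ys. length ys \<le> n \<Longrightarrow> A ys = A' ys"
  shows "length xs \<le> n \<Longrightarrow> rinv A xs = rinv A' xs"
proof (induction "length xs" arbitrary: xs rule: less_induct)
  case less
  have eA: "A [] = A' []" using assms by simp
  have "mprod (trz A) (rinv A) xs = mprod (trz A') (rinv A') xs"
    unfolding mprod_def
  proof (rule sum.cong[OF refl])
    fix k assume k: "k \<in> {0..length xs}"
    show "trz A (take k xs) * rinv A (drop k xs) = trz A' (take k xs) * rinv A' (drop k xs)"
    proof (cases "k = 0")
      case True
      then show ?thesis by (simp add: trz_def)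
    next
      case False
      then have "length (drop k xs) < length xs" using k by auto
      then have "rinv A (drop k xs) = rinv A' (drop k xs)" using less by simp
      moreover have "trz A (take k xs) = trz A' (take k xs)" using assms less(2) unfolding trz_def by simp
      ultimately show ?thesis by simp
    qed
  qed
  then have "PhiR A (rinv A) xs = PhiR A' (rinv A') xs" unfolding PhiR_def eA by simp
  then show ?case by (simp only: rinv_unfold[symmetric])
qed

context
  fixes sc :: "'k::field_char_0 \<Rightarrow> 'b::ring_1 \<Rightarrow> 'b"
  assumes alg: "algebra_over sc"
begin

lemma ml_trz: "ml sc A m \<Longrightarrow> ml sc (trz A) m"
proof (cases m)
  case 0
  then show ?thesis using ml_zero_len[OF alg] by simp
next
  case (Suc m')
  assume "ml sc A m"
  then show ?thesis by (subst ml_cong[where H'=A]) (auto simp: trz_def Suc)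
qed

lemma ml_rinv:
  assumes A: "\<And>m. m \<le> n \<Longrightarrow> ml sc A m"
  shows "m \<le> n \<Longrightarrow> ml sc (rinv A) m"
proof (induction m rule: less_induct)
  case (less m)
  show ?case
  proof (cases m)
    case 0
    then show ?thesis using ml_zero_len[OF alg] by simp
  next
    case (Suc m')
    have "ml sc (mprod (trz A) (rinv A)) m"
    proof (rule ml_mprod0[OF alg])
      show "trz A [] = 0" by (simp add: trz_def)
      show "ml sc (trz A) k" if "k \<le> m" for k using A[of k] ml_trz that less(2) by simp
      show "ml sc (rinv A) k" if "k < m" for k using less(1)[of k] that less(2) by simp
    qed
    then have L: "ml sc (\<lambda>xs. - (uinv (A []) * mprod (trz A) (rinv A) xs)) m"
      using ml_neg[OF alg] ml_mult_left[OF alg] by blast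
    have E: "\<And>xs. length xs = m \<Longrightarrow> rinv A xs = - (uinv (A []) * mprod (trz A) (rinv A) xs)"
    proof -
      fix xs :: "'b list" assume "length xs = m"
      then have "xs \<noteq> []" using Suc by auto
      then show "rinv A xs = - (uinv (A []) * mprod (trz A) (rinv A) xs)"
        by (subst rinv_unfold) (simp add: PhiR_def)
    qed
    show ?thesis by (subst ml_cong[OF E]) (simp_all add: L)
  qed
qed

lemma minv_eq:
  assumes A: "A \<in> G_inv sc" shows "minv sc A = rinv A"
  unfolding minv_def
proof (rule the_equality)
  have u: "is_unit_ring (A [])" using A unfolding G_inv_def by blast
  have mlA: "\<And>m. ml sc A m" using A unfolding G_inv_def Mult_ml by blast
  have "\<forall>n. ml sc (rinv A) n" using ml_rinv mlA by blast
  then show "rinv A \<in> Mult sc \<and> mprod A (rinv A) = mone \<and> mprod (rinv A) A = mone"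
    using rinv_right[of A, OF u] rinv_left[of A, OF u] Mult_ml by blast
  fix h assume "h \<in> Mult sc \<and> mprod A h = mone \<and> mprod h A = mone"
  then show "h = rinv A" using inv_unique_right[of A, OF u] by blast
qed

end


section \<open>Compositional inverses in G_I\<close>

definition Wc :: "('b::ring_1 list \<Rightarrow> 'b) \<Rightarrow> ('b list \<Rightarrow> 'b) \<Rightarrow> 'b list \<Rightarrow> 'b" where
  "Wc F s = mcomp F (mprod mI s)"

definition Sc :: "('b::ring_1 list \<Rightarrow> 'b) \<Rightarrow> 'b list \<Rightarrow> 'b" where
  "Sc F = (SOME s. rinv (Wc F s) = s)"

lemma local_Sc: "local_op (\<lambda>s. rinv (Wc F s))"
  unfolding local_op_def
proof (intro allI impI)
  fix s t :: "'a list \<Rightarrow> 'a" and xs :: "'a list"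
  assume h: "\<forall>ys. length ys < length xs \<longrightarrow> s ys = t ys"
  have "Wc F s ys = Wc F t ys" if "length ys \<le> length xs" for ys
    unfolding Wc_def
  proof (rule mcomp_local)
    fix zs :: "'a list" assume z: "zs \<noteq> []" "length zs \<le> length ys"
    then obtain z zs' where zs: "zs = z # zs'" by (cases zs) auto
    have "length zs' < length xs" using z that zs by simp
    then show "mprod mI s zs = mprod mI t zs" using h zs by simp
  qed
  then show "rinv (Wc F s) xs = rinv (Wc F t) xs"
    using rinv_local[of "length xs" "Wc F s" "Wc F t" xs] by simp
qed

lemma Sc_eq: "rinv (Wc F (Sc F)) = Sc F"
  unfolding Sc_def by (rule fix_some[OF local_Sc])

lemma Wc_Nil: "Wc F s [] = F []"
  unfolding Wc_def by simp

lemma Sc_Nil: "Sc F [] = uinv (F [])"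
  using rinv_Nil[of "Wc F (Sc F)"] Sc_eq[of F] Wc_Nil[of F "Sc F"] by simp

lemma Sc_inv: "is_unit_ring (F []) \<Longrightarrow> mprod (Sc F) (Wc F (Sc F)) = mone"
  using rinv_left[of "Wc F (Sc F)"] Sc_eq[of F] Wc_Nil[of F "Sc F"] by simp

lemma mI_mprod_Nil_zero: "mprod mI A [] = 0" by simp

lemma unit_bij: "is_unit_ring u \<Longrightarrow> bij (\<lambda>x. x * (u::'b::ring_1))"
proof -
  assume u: "is_unit_ring u"
  have i: "u * uinv u = 1" "uinv u * u = 1" using uinv[OF u] by simp_all
  show ?thesis
  proof (rule bijI)
    show "inj (\<lambda>x. x * u)"
    proof (rule injI)
      fix x y assume "x * u = y * u"
      then have "x * u * uinv u = y * u * uinv u" by simp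
      then show "x = y" using i by (simp add: mult.assoc)
    qed
    show "surj (\<lambda>x. x * u)"
    proof (rule surjI)
      fix y show "y * uinv u * u = y" using i by (simp add: mult.assoc)
    qed
  qed
qed

context
  fixes sc :: "'k::field_char_0 \<Rightarrow> 'b::ring_1 \<Rightarrow> 'b"
  assumes alg: "algebra_over sc"
begin

lemma ml_mIprod: "(\<And>n. ml sc A n) \<Longrightarrow> ml sc (mprod mI A) n"
  by (rule ml_mprod[OF alg]) (simp_all add: ml_mI[OF alg])

lemma Mult_mIprod: "A \<in> Mult sc \<Longrightarrow> mprod mI A \<in> Mult sc"
  using ml_mIprod unfolding Mult_ml by blast

lemma addall_Mult: "A \<in> Mult sc \<Longrightarrow> addall A"
  using ml_all_addall unfolding Mult_ml by blast

lemma ml_Sc: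
  assumes F: "F \<in> G_inv sc" shows "ml sc (Sc F) n"
proof (induction n rule: less_induct)
  case (less n)
  have mlF: "\<And>m. ml sc F m" using F unfolding G_inv_def Mult_ml by blast
  have "ml sc (Wc F (Sc F)) m" if "m \<le> n" for m
    unfolding Wc_def
  proof (rule ml_mcomp[OF alg mlF])
    fix m' assume m': "0 < m'" "m' \<le> m"
    show "ml sc (mprod mI (Sc F)) m'"
    proof (rule ml_mprod0[OF alg])
      show "mI [] = 0" by simp
      show "ml sc mI k" for k by (rule ml_mI[OF alg])
      show "ml sc (Sc F) k" if "k < m'" for k using less that m' \<open>m \<le> n\<close> by simp
    qed
  qed
  then have "ml sc (rinv (Wc F (Sc F))) n" using ml_rinv[OF alg] by blast
  then show ?case using Sc_eq[of F] by simp
qed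

lemma Sc_G_inv: assumes F: "F \<in> G_inv sc" shows "Sc F \<in> G_inv sc"
proof -
  have u: "is_unit_ring (F [])" using F unfolding G_inv_def by blast
  have "Sc F \<in> Mult sc" using ml_Sc[OF F] Mult_ml by blast
  moreover have "is_unit_ring (Sc F [])" using Sc_Nil[of F] uinv_unit[OF u] by simp
  ultimately show ?thesis unfolding G_inv_def by blast
qed

lemma comp_mIprod: "c [] = 0 \<Longrightarrow> mcomp (mprod mI F) c = mprod c (mcomp F c)"
  by (simp add: mcomp_mprod mcomp_mI_left)

lemma comp_right_inv:
  assumes F: "F \<in> G_inv sc" shows "mcomp (mprod mI F) (mprod mI (Sc F)) = mI"
proof -
  have u: "is_unit_ring (F [])" using F unfolding G_inv_def by blast
  have "mcomp (mprod mI F) (mprod mI (Sc F)) = mprod (mprod mI (Sc F)) (Wc F (Sc F))"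
    unfolding Wc_def by (rule comp_mIprod) simp
  also have "\<dots> = mprod mI (mprod (Sc F) (Wc F (Sc F)))" by (simp add: mprod_assoc)
  also have "\<dots> = mI" using Sc_inv[of F, OF u] by simp
  finally show ?thesis .
qed

lemma comp_left_inv:
  assumes F: "F \<in> G_inv sc" shows "mcomp (mprod mI (Sc F)) (mprod mI F) = mI"
proof -
  let ?f = "mprod mI F" and ?k = "mprod mI (Sc F)" and ?k' = "mprod mI (Sc (Sc F))"
  have S: "Sc F \<in> G_inv sc" by (rule Sc_G_inv[OF F])
  have kk: "mcomp ?k ?k' = mI" by (rule comp_right_inv[OF S])
  have fk: "mcomp ?f ?k = mI" by (rule comp_right_inv[OF F])
  have af: "addall ?f" using F unfolding G_inv_def by (simp add: addall_Mult Mult_mIprod)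
  have "?f = mcomp ?f mI" using mcomp_mI_right[OF af] by simp
  also have "\<dots> = mcomp ?f (mcomp ?k ?k')" using kk by simp
  also have "\<dots> = mcomp (mcomp ?f ?k) ?k'" using mcomp_assoc[OF af] by simp
  also have "\<dots> = ?k'" using fk mcomp_mI_left[of ?k'] by simp
  finally have "?f = ?k'" .
  then show ?thesis using kk by simp
qed

lemma mIprod_G_dif: assumes F: "F \<in> G_inv sc" shows "mprod mI F \<in> G_dif sc"
proof -
  have u: "is_unit_ring (F [])" using F unfolding G_inv_def by blast
  have "mprod mI F \<in> Mult sc" using F unfolding G_inv_def by (simp add: Mult_mIprod)
  moreover have "(\<lambda>x. mprod mI F [x]) = (\<lambda>x. x * F [])" by simp
  ultimately show ?thesis unfolding G_dif_def using unit_bij[OF u] by simp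
qed

lemma cinv_eq:
  assumes F: "F \<in> G_inv sc" shows "cinv sc (mprod mI F) = mprod mI (Sc F)"
  unfolding cinv_def
proof (rule the_equality)
  show "mprod mI (Sc F) \<in> G_dif sc \<and> mcomp (mprod mI F) (mprod mI (Sc F)) = mI \<and> mcomp (mprod mI (Sc F)) (mprod mI F) = mI"
    using mIprod_G_dif[OF Sc_G_inv[OF F]] comp_right_inv[OF F] comp_left_inv[OF F] by blast
  fix h assume h: "h \<in> G_dif sc \<and> mcomp (mprod mI F) h = mI \<and> mcomp h (mprod mI F) = mI"
  have ah: "addall h" using h unfolding G_dif_def by (simp add: addall_Mult)
  have "h = mcomp h mI" using mcomp_mI_right[OF ah] by simp
  also have "\<dots> = mcomp h (mcomp (mprod mI F) (mprod mI (Sc F)))" using comp_right_inv[OF F] by simp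
  also have "\<dots> = mcomp (mcomp h (mprod mI F)) (mprod mI (Sc F))" using mcomp_assoc[OF ah] by simp
  also have "\<dots> = mprod mI (Sc F)" using h mcomp_mI_left[of "mprod mI (Sc F)"] by simp
  finally show "h = mprod mI (Sc F)" .
qed

lemma S_transform_eq:
  assumes F: "F \<in> G_inv sc" shows "S_transform sc (mprod mI F) = Sc F"
  unfolding S_transform_def cinv_eq[OF F]
proof (rule the_equality)
  show "Sc F \<in> G_inv sc \<and> mprod mI (Sc F) = mprod mI (Sc F)" using Sc_G_inv[OF F] by simp
  fix F' assume "F' \<in> G_inv sc \<and> mprod mI (Sc F) = mprod mI F'"
  then show "F' = Sc F" using mI_cancel by metis
qed

end


section \<open>Trees\<close>

definition il :: "'b::ring_1 list \<Rightarrow> 'b list" where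
  "il xs = concat (map (\<lambda>x. [x, 1]) xs)"

definition il' :: "'b::ring_1 list \<Rightarrow> 'b list" where
  "il' xs = concat (map (\<lambda>x. [1, x]) xs)"

lemma il_Nil[simp]: "il [] = []" and il_Cons[simp]: "il (x # xs) = x # 1 # il xs"
  unfolding il_def by simp_all

lemma il'_Nil[simp]: "il' [] = []" and il'_Cons[simp]: "il' (x # xs) = 1 # x # il' xs"
  unfolding il'_def by simp_all

lemma length_il[simp]: "length (il xs) = 2 * length xs"
  by (induction xs) simp_all

lemma length_il'[simp]: "length (il' xs) = 2 * length xs"
  by (induction xs) simp_all

lemma take_il: "take (2 * k) (il xs) = il (take k xs)"
proof (induction xs arbitrary: k)
  case Nil
  then show ?case by simp
next
  case (Cons x xs)
  then show ?case by (cases k) simp_all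
qed

lemma drop_il: "drop (2 * k) (il xs) = il (drop k xs)"
proof (induction xs arbitrary: k)
  case Nil
  then show ?case by simp
next
  case (Cons x xs)
  then show ?case by (cases k) simp_all
qed

lemma take_il': "take (2 * k) (il' xs) = il' (take k xs)"
proof (induction xs arbitrary: k)
  case Nil
  then show ?case by simp
next
  case (Cons x xs)
  then show ?case by (cases k) simp_all
qed

lemma drop_il': "drop (2 * k) (il' xs) = il' (drop k xs)"
proof (induction xs arbitrary: k)
  case Nil
  then show ?case by simp
next
  case (Cons x xs)
  then show ?case by (cases k) simp_all
qed

lemma il'_nth_odd: "i < length xs \<Longrightarrow> il' xs ! (2 * i + 1) = xs ! i"
proof (induction xs arbitrary: i)
  case Nil
  then show ?case by simp
next
  case (Cons x xs)
  then show ?case by (cases i) simp_all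
qed

lemma il'_nth_even: "i < length xs \<Longrightarrow> il' xs ! (2 * i) = 1"
proof (induction xs arbitrary: i)
  case Nil
  then show ?case by simp
next
  case (Cons x xs)
  then show ?case by (cases i) simp_all
qed

lemma one_il: "1 # il xs = il' xs @ [1]"
  by (induction xs) simp_all

lemma il_Cons': "il (y # ys) = (y # il' ys) @ [1]"
  using one_il[of ys] by simp

lemma size_Rt[simp]: "size (Rt t) = 2 * size t"
  by (induction t) simp_all

lemma cup_args_Rt_Node:
  "cup_args f g (Rt (Node a b)) zs =
    (f (zs ! 0 # cup_args g f (Rt a) (take (2 * size a) (drop 1 zs))) * zs ! (2 * size a + 1)) #
    cup_args f g (Rt b) (drop (2 * size a + 2) zs)"
proof -
  have "cup g f (Node Leaf (Rt a)) (take (2 * size a + 1) zs) =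
      f ((1 * take (2 * size a + 1) zs ! 0) # cup_args g f (Rt a) (drop 1 (take (2 * size a + 1) zs)))"
    by simp
  also have "\<dots> = f (zs ! 0 # cup_args g f (Rt a) (take (2 * size a) (drop 1 zs)))"
    by (simp add: drop_take)
  finally have e: "cup g f (Node Leaf (Rt a)) (take (2 * size a + 1) zs) = f (zs ! 0 # cup_args g f (Rt a) (take (2 * size a) (drop 1 zs)))" .
  show ?thesis using e by (simp add: numeral_2_eq_2)
qed

lemma SpL:
  assumes "size a \<le> length xs"
  shows "cup_args f g (Rt (Node a b)) (il (x # xs)) =
    (f (x # cup_args g f (Rt a) (il' (take (size a) xs))) * 1) # cup_args f g (Rt b) (il (drop (size a) xs))"
proof -
  let ?m = "size a"
  have t: "take (2 * ?m) (drop 1 (il (x # xs))) = il' (take ?m xs)"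
  proof -
    have "drop 1 (il (x # xs)) = il' xs @ [1]" using one_il[of xs] by simp
    then show ?thesis using assms by (simp add: take_il')
  qed
  have n: "il (x # xs) ! (2 * ?m + 1) = 1"
  proof -
    have "il (x # xs) ! (2 * ?m + 1) = (1 # il xs) ! (2 * ?m)" by simp
    also have "\<dots> = (il' xs @ [1]) ! (2 * ?m)" by (simp only: one_il)
    also have "\<dots> = 1"
    proof (cases "?m < length xs")
      case True
      then show ?thesis by (simp add: nth_append il'_nth_even)
    next
      case False
      then have "?m = length xs" using assms by simp
      then show ?thesis by (simp add: nth_append)
    qed
    finally show ?thesis .
  qed
  have d: "drop (2 * ?m + 2) (il (x # xs)) = il (drop ?m xs)"
    using drop_il[of ?m xs] by simp
  show ?thesis unfolding cup_args_Rt_Node t n d by simp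
qed

lemma SpR:
  assumes "size c < length ys"
  shows "cup_args f g (Rt (Node c d)) (il' ys) =
    (f (1 # cup_args g f (Rt c) (il (take (size c) ys))) * ys ! (size c)) # cup_args f g (Rt d) (il' (drop (size c + 1) ys))"
proof -
  let ?m = "size c"
  obtain y ys' where ys: "ys = y # ys'" using assms by (cases ys) auto
  have t: "take (2 * ?m) (drop 1 (il' ys)) = il (take ?m ys)"
  proof -
    have "drop 1 (il' ys) = y # il' ys'" using ys by simp
    moreover have "take (2 * ?m) (il ys) = take (2 * ?m) ((y # il' ys') @ [1])"
      by (simp only: ys il_Cons')
    moreover have "\<dots> = take (2 * ?m) (y # il' ys')"
      by (subst take_append) (use assms ys in simp)
    ultimately show ?thesis by (simp add: take_il)
  qed
  have n0: "il' ys ! 0 = 1" using ys by simp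
  have n: "il' ys ! (2 * ?m + 1) = ys ! ?m" using il'_nth_odd assms by simp
  have d: "drop (2 * ?m + 2) (il' ys) = il' (drop (?m + 1) ys)"
    using drop_il'[of "?m + 1" ys] by simp
  show ?thesis unfolding cup_args_Rt_Node t n n0 d by simp
qed

definition TS :: "nat \<Rightarrow> tree set" where
  "TS n = {t. size t = n}"

lemma size0: "size t = 0 \<longleftrightarrow> t = Leaf"
  by (cases t) simp_all

lemma TS_0: "TS 0 = {Leaf}"
  unfolding TS_def using size0 by auto


lemma TS_Suc: "TS (Suc n) = (\<lambda>p. Node (fst (snd p)) (snd (snd p))) ` (SIGMA m:{0..n}. TS m \<times> TS (n - m))"
proof
  show "TS (Suc n) \<subseteq> (\<lambda>p. Node (fst (snd p)) (snd (snd p))) ` (SIGMA m:{0..n}. TS m \<times> TS (n - m))"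
  proof
    fix t assume "t \<in> TS (Suc n)"
    then have t: "size t = Suc n" unfolding TS_def by simp
    then obtain a b where ab: "t = Node a b" by (cases t) auto
    then have "size a + size b = n" using t by simp
    then have "(size a, (a, b)) \<in> (SIGMA m:{0..n}. TS m \<times> TS (n - m))" unfolding TS_def by auto
    then show "t \<in> (\<lambda>p. Node (fst (snd p)) (snd (snd p))) ` (SIGMA m:{0..n}. TS m \<times> TS (n - m))"
      using ab by force
  qed
  show "(\<lambda>p. Node (fst (snd p)) (snd (snd p))) ` (SIGMA m:{0..n}. TS m \<times> TS (n - m)) \<subseteq> TS (Suc n)"
    unfolding TS_def by auto
qed

lemma inj_TS_Suc: "inj_on (\<lambda>p. Node (fst (snd p)) (snd (snd p))) (SIGMA m:{0..n}. TS m \<times> TS (n - m))"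
  unfolding inj_on_def TS_def by auto

lemma finite_TS: "finite (TS n)"
proof (induction n rule: less_induct)
  case (less n)
  show ?case
  proof (cases n)
    case 0
    then show ?thesis by (simp add: TS_0)
  next
    case (Suc n')
    have "finite (SIGMA m:{0..n'}. TS m \<times> TS (n' - m))"
      using less Suc by (intro finite_SigmaI) auto
    then show ?thesis unfolding Suc TS_Suc by blast
  qed
qed

lemma sum_TS_Suc: "(\<Sum>t\<in>TS (Suc n). phi t) = (\<Sum>m=0..n. \<Sum>a\<in>TS m. \<Sum>b\<in>TS (n - m). phi (Node a b))"
proof -
  have "(\<Sum>t\<in>TS (Suc n). phi t) = (\<Sum>p\<in>(SIGMA m:{0..n}. TS m \<times> TS (n - m)). phi (Node (fst (snd p)) (snd (snd p))))"
    unfolding TS_Suc by (subst sum.reindex[OF inj_TS_Suc]) simp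
  also have "\<dots> = (\<Sum>m=0..n. \<Sum>q\<in>TS m \<times> TS (n - m). phi (Node (fst q) (snd q)))"
    by (subst sum.Sigma) (simp_all add: finite_TS case_prod_unfold)
  also have "\<dots> = (\<Sum>m=0..n. \<Sum>a\<in>TS m. \<Sum>b\<in>TS (n - m). phi (Node a b))"
    by (simp add: sum.cartesian_product case_prod_unfold)
  finally show ?thesis .
qed

lemma sum_list_concat: "sum_list (concat xss) = sum_list (map sum_list (xss :: 'a::monoid_add list list))"
  by (induction xss) simp_all

lemma mcomp_Cons:
  "mcomp H c (x # xs) = (\<Sum>k=1..length xs + 1. mcomp (\<lambda>ws. H (c (take k (x # xs)) # ws)) c (drop k (x # xs)))"
proof -
  have "mcomp H c (x # xs) = sum_list (map (\<lambda>bs. H (map c bs))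
      (concat (map (\<lambda>k. map (\<lambda>bs. take k (x # xs) # bs) (blocks (drop k (x # xs)))) [1..<length xs + 2])))"
    unfolding mcomp_def by (simp only: blocks.simps(2))
  also have "\<dots> = sum_list (map (\<lambda>k. mcomp (\<lambda>ws. H (c (take k (x # xs)) # ws)) c (drop k (x # xs))) [1..<length xs + 2])"
    by (simp add: map_concat sum_list_concat o_def mcomp_def)
  also have "\<dots> = (\<Sum>k\<in>{1..<length xs + 2}. mcomp (\<lambda>ws. H (c (take k (x # xs)) # ws)) c (drop k (x # xs)))"
    by (simp only: sum_list_distinct_conv_sum_set[OF distinct_upt] set_upt)
  also have "{1..<length xs + 2} = {1..length xs + 1}" by auto
  finally show ?thesis .
qed

definition TX :: "('b::ring_1 list \<Rightarrow> 'b) \<Rightarrow> ('b list \<Rightarrow> 'b) \<Rightarrow> ('b list \<Rightarrow> 'b) \<Rightarrow> 'b list \<Rightarrow> 'b" where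
  "TX f g H ys = (\<Sum>a\<in>TS (length ys). H (cup_args g f (Rt a) (il' ys)))"

definition TY :: "('b::ring_1 list \<Rightarrow> 'b) \<Rightarrow> ('b list \<Rightarrow> 'b) \<Rightarrow> ('b list \<Rightarrow> 'b) \<Rightarrow> 'b list \<Rightarrow> 'b" where
  "TY f g H xs = (\<Sum>c\<in>TS (length xs). H (cup_args f g (Rt c) (il xs)))"

lemma addall_shift: "addall H \<Longrightarrow> addall (\<lambda>ws. H (w0 # ws))"
  unfolding addall_def by (metis append_Cons)

lemma addall_pull: "addall H \<Longrightarrow> finite A \<Longrightarrow> (\<Sum>i\<in>A. H (v i # ss)) = H ((\<Sum>i\<in>A. v i) # ss)"
  using addall_sum[of H A "[]" v ss] by simp

lemma TY_Nil: "TY f g H [] = H []"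
  unfolding TY_def by (simp add: TS_0)

lemma TX_Nil: "TX f g H [] = H []"
  unfolding TX_def by (simp add: TS_0)

lemma tree1:
  assumes H: "addall H" and f: "\<And>x w. f (x # w) = x * F w"
  shows "TY f g H xs = mcomp H (mprod mI (TX f g F)) xs"
  using H
proof (induction "length xs" arbitrary: xs H rule: less_induct)
  case less
  show ?case
  proof (cases xs)
    case Nil
    then show ?thesis by (simp add: TY_Nil)
  next
    case (Cons x xs')
    let ?n = "length xs'"
    let ?p = "mprod mI (TX f g F)"
    let ?H' = "\<lambda>m ws. H ((x * TX f g F (take m xs')) # ws)"
    have "TY f g H xs = (\<Sum>m=0..?n. \<Sum>a\<in>TS m. \<Sum>b\<in>TS (?n - m). H (cup_args f g (Rt (Node a b)) (il (x # xs'))))"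
      unfolding TY_def Cons by (simp add: sum_TS_Suc)
    also have "\<dots> = (\<Sum>m=0..?n. \<Sum>a\<in>TS m. \<Sum>b\<in>TS (?n - m).
        H ((x * F (cup_args g f (Rt a) (il' (take m xs')))) # cup_args f g (Rt b) (il (drop m xs'))))"
    proof (intro sum.cong refl)
      fix m a b assume m: "m \<in> {0..?n}" and a: "a \<in> TS m"
      have sa: "size a = m" using a unfolding TS_def by simp
      show "H (cup_args f g (Rt (Node a b)) (il (x # xs'))) =
        H ((x * F (cup_args g f (Rt a) (il' (take m xs')))) # cup_args f g (Rt b) (il (drop m xs')))"
        using SpL[of a xs' f g b x] sa m f by simp
    qed
    also have "\<dots> = (\<Sum>m=0..?n. \<Sum>b\<in>TS (?n - m). \<Sum>a\<in>TS m.
        H ((x * F (cup_args g f (Rt a) (il' (take m xs')))) # cup_args f g (Rt b) (il (drop m xs'))))"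
      by (rule sum.cong[OF refl]) (rule sum.swap)
    also have "\<dots> = (\<Sum>m=0..?n. \<Sum>b\<in>TS (?n - m). ?H' m (cup_args f g (Rt b) (il (drop m xs'))))"
    proof (intro sum.cong refl)
      fix m b assume m: "m \<in> {0..?n}"
      have "(\<Sum>a\<in>TS m. H ((x * F (cup_args g f (Rt a) (il' (take m xs')))) # cup_args f g (Rt b) (il (drop m xs')))) =
          H ((\<Sum>a\<in>TS m. x * F (cup_args g f (Rt a) (il' (take m xs')))) # cup_args f g (Rt b) (il (drop m xs')))"
        by (rule addall_pull[OF less.prems finite_TS])
      also have "(\<Sum>a\<in>TS m. x * F (cup_args g f (Rt a) (il' (take m xs')))) = x * TX f g F (take m xs')"
        unfolding TX_def sum_distrib_left using m by simp
      finally show "(\<Sum>a\<in>TS m. H ((x * F (cup_args g f (Rt a) (il' (take m xs')))) # cup_args f g (Rt b) (il (drop m xs')))) =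
          ?H' m (cup_args f g (Rt b) (il (drop m xs')))" .
    qed
    also have "\<dots> = (\<Sum>m=0..?n. TY f g (?H' m) (drop m xs'))"
      unfolding TY_def by simp
    also have "\<dots> = (\<Sum>m=0..?n. mcomp (?H' m) ?p (drop m xs'))"
    proof (rule sum.cong[OF refl])
      fix m assume m: "m \<in> {0..?n}"
      have "length (drop m xs') < length xs" using Cons by simp
      then show "TY f g (?H' m) (drop m xs') = mcomp (?H' m) ?p (drop m xs')"
        using less.hyps addall_shift[OF less.prems] by blast
    qed
    also have "\<dots> = (\<Sum>k=Suc 0..Suc ?n. mcomp (\<lambda>ws. H (?p (take k (x # xs')) # ws)) ?p (drop k (x # xs')))"
      by (subst sum.shift_bounds_cl_Suc_ivl) simp
    also have "\<dots> = mcomp H ?p xs"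
      unfolding Cons mcomp_Cons by simp
    finally show ?thesis .
  qed
qed

lemma tree2:
  assumes H: "addall H" and g: "\<And>w. g (1 # w) = G w"
  shows "TX f g H ys = mcomp H (mprod (TY f g G) mI) ys"
  using H
proof (induction "length ys" arbitrary: ys H rule: less_induct)
  case less
  show ?case
  proof (cases ys)
    case Nil
    then show ?thesis by (simp add: TX_Nil)
  next
    case (Cons y ys')
    let ?n = "length ys'"
    let ?q = "mprod (TY f g G) mI"
    let ?H' = "\<lambda>m ws. H ((TY f g G (take m ys) * ys ! m) # ws)"
    have "TX f g H ys = (\<Sum>m=0..?n. \<Sum>c\<in>TS m. \<Sum>d\<in>TS (?n - m). H (cup_args g f (Rt (Node c d)) (il' ys)))"
      unfolding TX_def Cons by (simp add: sum_TS_Suc)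
    also have "\<dots> = (\<Sum>m=0..?n. \<Sum>c\<in>TS m. \<Sum>d\<in>TS (?n - m).
        H ((G (cup_args f g (Rt c) (il (take m ys))) * ys ! m) # cup_args g f (Rt d) (il' (drop (m + 1) ys))))"
    proof (intro sum.cong refl)
      fix m c d assume m: "m \<in> {0..?n}" and c: "c \<in> TS m"
      have sc: "size c = m" using c unfolding TS_def by simp
      have "size c < length ys" using sc m Cons by simp
      then show "H (cup_args g f (Rt (Node c d)) (il' ys)) =
        H ((G (cup_args f g (Rt c) (il (take m ys))) * ys ! m) # cup_args g f (Rt d) (il' (drop (m + 1) ys)))"
        using SpR[of c ys g f d] sc g by simp
    qed
    also have "\<dots> = (\<Sum>m=0..?n. \<Sum>d\<in>TS (?n - m). \<Sum>c\<in>TS m.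
        H ((G (cup_args f g (Rt c) (il (take m ys))) * ys ! m) # cup_args g f (Rt d) (il' (drop (m + 1) ys))))"
      by (rule sum.cong[OF refl]) (rule sum.swap)
    also have "\<dots> = (\<Sum>m=0..?n. \<Sum>d\<in>TS (?n - m). ?H' m (cup_args g f (Rt d) (il' (drop (m + 1) ys))))"
    proof (intro sum.cong refl)
      fix m d assume m: "m \<in> {0..?n}"
      have "(\<Sum>c\<in>TS m. H ((G (cup_args f g (Rt c) (il (take m ys))) * ys ! m) # cup_args g f (Rt d) (il' (drop (m + 1) ys)))) =
          H ((\<Sum>c\<in>TS m. G (cup_args f g (Rt c) (il (take m ys))) * ys ! m) # cup_args g f (Rt d) (il' (drop (m + 1) ys)))"
        by (rule addall_pull[OF less.prems finite_TS])
      also have "(\<Sum>c\<in>TS m. G (cup_args f g (Rt c) (il (take m ys))) * ys ! m) = TY f g G (take m ys) * ys ! m"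
        unfolding TY_def sum_distrib_right using m Cons by simp
      finally show "(\<Sum>c\<in>TS m. H ((G (cup_args f g (Rt c) (il (take m ys))) * ys ! m) # cup_args g f (Rt d) (il' (drop (m + 1) ys)))) =
          ?H' m (cup_args g f (Rt d) (il' (drop (m + 1) ys)))" .
    qed
    also have "\<dots> = (\<Sum>m=0..?n. TX f g (?H' m) (drop (m + 1) ys))"
      unfolding TX_def using Cons by simp
    also have "\<dots> = (\<Sum>m=0..?n. mcomp (?H' m) ?q (drop (m + 1) ys))"
    proof (rule sum.cong[OF refl])
      fix m assume m: "m \<in> {0..?n}"
      have "length (drop (m + 1) ys) < length ys" using Cons by simp
      then show "TX f g (?H' m) (drop (m + 1) ys) = mcomp (?H' m) ?q (drop (m + 1) ys)"
        using less.hyps addall_shift[OF less.prems] by blast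
    qed
    also have "\<dots> = (\<Sum>m=0..?n. mcomp (\<lambda>ws. H (?q (take (Suc m) ys) # ws)) ?q (drop (Suc m) ys))"
    proof (rule sum.cong[OF refl])
      fix m assume m: "m \<in> {0..?n}"
      have "take (Suc m) ys \<noteq> []" using Cons by simp
      then have "?q (take (Suc m) ys) = TY f g G (butlast (take (Suc m) ys)) * last (take (Suc m) ys)"
        by (rule mprod_mI_nonempty)
      also have "butlast (take (Suc m) ys) = take m ys"
      proof -
        have "Suc m \<le> length ys" using m Cons by simp
        from butlast_take[OF this] show ?thesis by simp
      qed
      also have "last (take (Suc m) ys) = ys ! m"
      proof -
        have ml: "m < length ys" using m Cons by simp
        have ne: "take (Suc m) ys \<noteq> []" using Cons by simp
        show ?thesis using last_conv_nth[OF ne] ml by simp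
      qed
      finally show "mcomp (?H' m) ?q (drop (m + 1) ys) = mcomp (\<lambda>ws. H (?q (take (Suc m) ys) # ws)) ?q (drop (Suc m) ys)"
        by simp
    qed
    also have "\<dots> = (\<Sum>k=Suc 0..Suc ?n. mcomp (\<lambda>ws. H (?q (take k ys) # ws)) ?q (drop k ys))"
      by (subst sum.shift_bounds_cl_Suc_ivl) simp
    also have "\<dots> = mcomp H ?q ys"
      unfolding Cons mcomp_Cons by simp
    finally show ?thesis .
  qed
qed

lemma boxconv_TY:
  "boxconv f g = TY f g g"
proof
  fix xs :: "'a list"
  show "boxconv f g xs = TY f g g xs"
  proof (cases "xs = []")
    case True
    then show ?thesis by (simp add: boxconv_def TY_Nil)
  next
    case False
    have "boxconv f g xs = (\<Sum>t\<in>TS (length xs). cup f g (Rt t) (il xs))"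
      using False unfolding boxconv_def TS_def il_def by simp
    also have "\<dots> = (\<Sum>t\<in>TS (length xs). g (cup_args f g (Rt t) (il xs)))"
    proof (rule sum.cong[OF refl])
      fix t assume "t \<in> TS (length xs)"
      then have "t \<noteq> Leaf" using False unfolding TS_def by auto
      then obtain a b where "t = Node a b" by (cases t) auto
      then show "cup f g (Rt t) (il xs) = g (cup_args f g (Rt t) (il xs))" by simp
    qed
    finally show ?thesis unfolding TY_def .
  qed
qed


theorem theorem3p2:
  fixes scale :: "'k::field_char_0 \<Rightarrow> 'b::ring_1 \<Rightarrow> 'b"
    and f g :: "'b list \<Rightarrow> 'b"
  assumes "algebra_over scale"
    and "f \<in> G_I scale" and "g \<in> G_I scale"
  shows "boxconv f g \<in> G_I scale
    \<and> S_transform scale (boxconv f g)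
        = mprod (S_transform scale g)
            (mcomp (S_transform scale f)
               (mprod (mprod (minv scale (S_transform scale g)) mI) (S_transform scale g)))"
proof -
  note alg = assms(1)
  obtain F where F: "F \<in> G_inv scale" and fF: "f = mprod mI F" using assms(2) unfolding G_I_def by blast
  obtain G where G: "G \<in> G_inv scale" and gG: "g = mprod mI G" using assms(3) unfolding G_I_def by blast
  have mlF: "\<And>n. ml scale F n" using F unfolding G_inv_def Mult_ml by blast
  have mlG: "\<And>n. ml scale G n" using G unfolding G_inv_def Mult_ml by blast
  have uF: "is_unit_ring (F [])" using F unfolding G_inv_def by blast
  have uG: "is_unit_ring (G [])" using G unfolding G_inv_def by blast
  have aF: "addall F" using mlF ml_all_addall by blast
  have aG: "addall G" using mlG ml_all_addall by blast
  have mlf: "\<And>n. ml scale f n" unfolding fF by (rule ml_mIprod[OF alg mlF])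
  have mlg: "\<And>n. ml scale g n" unfolding gG by (rule ml_mIprod[OF alg mlG])
  have af: "addall f" using mlf ml_all_addall by blast
  have ag: "addall g" using mlg ml_all_addall by blast
  have fx: "\<And>x w. f (x # w) = x * F w" unfolding fF by simp
  have g1: "\<And>w. g (1 # w) = G w" unfolding gG by simp
  define X where "X = TX f g F"
  define Y where "Y = TY f g G"
  define p where "p = mprod mI X"
  define c where "c = mprod Y mI"
  have X_eq: "X = mcomp F c"
    unfolding X_def c_def Y_def using tree2[where H=F and g=g and G=G and f=f, OF aF g1] by blast
  have Y_eq: "Y = mcomp G p"
    unfolding Y_def p_def X_def using tree1[where H=G and f=f and F=F and g=g, OF aG fx] by blast
  have box: "boxconv f g = mcomp g p"
    unfolding boxconv_TY p_def X_def using tree1[where H=g and f=f and F=F and g=g, OF ag fx] by blast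
  have p0: "p [] = 0" unfolding p_def by simp
  have c0: "c [] = 0" unfolding c_def by simp
  have X0: "X [] = F []" unfolding X_eq by simp
  have Y0: "Y [] = G []" unfolding Y_eq by simp
  have box2: "boxconv f g = mprod mI (mprod X Y)"
  proof -
    have "boxconv f g = mcomp (mprod mI G) p" using box gG by simp
    also have "\<dots> = mprod p (mcomp G p)" by (rule comp_mIprod[where c=p, OF alg p0])
    also have "\<dots> = mprod p Y" using Y_eq by simp
    also have "\<dots> = mprod mI (mprod X Y)" unfolding p_def by (simp add: mprod_assoc)
    finally show ?thesis .
  qed
  have mlXY: "ml scale X n \<and> ml scale Y n" for n
  proof (induction n rule: less_induct)
    case (less n)
    have "ml scale X n" unfolding X_eq
    proof (rule ml_mcomp[OF alg mlF])
      fix m assume m: "0 < m" "m \<le> n"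
      show "ml scale c m" unfolding c_def
      proof (rule ml_mprod0'[OF alg])
        show "mI [] = 0" by simp
        show "ml scale Y k" if "k < m" for k using less that m by simp
        show "ml scale mI k" for k by (rule ml_mI[OF alg])
      qed
    qed
    moreover have "ml scale Y n" unfolding Y_eq
    proof (rule ml_mcomp[OF alg mlG])
      fix m assume m: "0 < m" "m \<le> n"
      show "ml scale p m" unfolding p_def
      proof (rule ml_mprod0[OF alg])
        show "mI [] = 0" by simp
        show "ml scale X k" if "k < m" for k using less that m by simp
        show "ml scale mI k" for k by (rule ml_mI[OF alg])
      qed
    qed
    ultimately show ?case by blast
  qed
  have mlX: "\<And>n. ml scale X n" and mlY: "\<And>n. ml scale Y n" using mlXY by blast+
  define H0 where "H0 = mprod X Y"
  have mlH0: "\<And>n. ml scale H0 n" unfolding H0_def by (rule ml_mprod[OF alg]) (simp_all add: mlX mlY)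
  have uH0: "is_unit_ring (H0 [])" unfolding H0_def using unit_mult[OF uF uG] X0 Y0 by simp
  have H0inv: "H0 \<in> G_inv scale" unfolding G_inv_def using mlH0 uH0 Mult_ml by blast
  have part1: "boxconv f g \<in> G_I scale" unfolding G_I_def box2 H0_def[symmetric] using H0inv by blast
  define Sf where "Sf = Sc F"
  define Sg where "Sg = Sc G"
  have SfG: "Sf \<in> G_inv scale" unfolding Sf_def by (rule Sc_G_inv[OF alg F])
  have SgG: "Sg \<in> G_inv scale" unfolding Sg_def by (rule Sc_G_inv[OF alg G])
  have mlSf: "\<And>n. ml scale Sf n" using SfG unfolding G_inv_def Mult_ml by blast
  have mlSg: "\<And>n. ml scale Sg n" using SgG unfolding G_inv_def Mult_ml by blast
  have uSg: "is_unit_ring (Sg [])" using SgG unfolding G_inv_def by blast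
  have aSf: "addall Sf" using mlSf ml_all_addall by blast
  have Stf: "S_transform scale f = Sf" unfolding fF Sf_def by (rule S_transform_eq[OF alg F])
  have Stg: "S_transform scale g = Sg" unfolding gG Sg_def by (rule S_transform_eq[OF alg G])
  have Sth: "S_transform scale (boxconv f g) = Sc H0" unfolding box2 H0_def[symmetric] by (rule S_transform_eq[OF alg H0inv])
  have minvSg: "minv scale Sg = rinv Sg" by (rule minv_eq[OF alg SgG])
  define gi where "gi = mprod mI Sg"
  define Q where "Q = mcomp Sf (mprod G mI)"
  define q where "q = mprod mI Q"
  have gi0: "gi [] = 0" unfolding gi_def by simp
  have g_gi: "mcomp g gi = mI" unfolding gG gi_def Sg_def by (rule comp_right_inv[OF alg G])
  have gi_g: "mcomp gi g = mI" unfolding gG gi_def Sg_def by (rule comp_left_inv[OF alg G])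
  have mlgi: "\<And>n. ml scale gi n" unfolding gi_def by (rule ml_mIprod[OF alg mlSg])
  have mlQ: "\<And>n. ml scale Q n" unfolding Q_def
    by (rule ml_mcomp[OF alg mlSf], rule ml_mprod[OF alg]) (simp_all add: mlG ml_mI[OF alg])
  have mlq: "\<And>n. ml scale q n" unfolding q_def by (rule ml_mIprod[OF alg mlQ])
  have aq: "addall q" using mlq ml_all_addall by blast
  \<comment> \<open>Step 1: q o p = I\<close>
  have Sf_f: "mcomp Sf f = rinv F"
  proof -
    have "mcomp (mprod mI Sf) f = mI" unfolding fF Sf_def by (rule comp_left_inv[OF alg F])
    moreover have "mcomp (mprod mI Sf) f = mprod mI (mprod F (mcomp Sf f))"
      using comp_mIprod[where c=f and F=Sf, OF alg] unfolding fF by (simp add: mprod_assoc)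
    ultimately have "mprod mI (mprod F (mcomp Sf f)) = mprod mI mone" by simp
    then have "mprod F (mcomp Sf f) = mone" by (rule mI_cancel)
    then show ?thesis by (rule inv_unique_right[where A=F, OF uF])
  qed
  have Yp: "mprod Y p = mcomp f c"
  proof -
    have "mprod Y p = mprod c X" unfolding p_def c_def by (simp add: mprod_assoc)
    also have "\<dots> = mcomp f c" unfolding X_eq fF by (rule comp_mIprod[where c=c, OF alg c0, symmetric])
    finally show ?thesis .
  qed
  have Qp: "mcomp Q p = mcomp (rinv F) c"
  proof -
    have "mcomp Q p = mcomp Sf (mcomp (mprod G mI) p)" unfolding Q_def by (rule mcomp_assoc[OF aSf])
    also have "mcomp (mprod G mI) p = mprod Y p" by (simp add: mcomp_mprod Y_eq mcomp_mI_left[where c=p, OF p0])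
    also have "\<dots> = mcomp f c" by (rule Yp)
    also have "mcomp Sf (mcomp f c) = mcomp (mcomp Sf f) c" by (rule mcomp_assoc[OF aSf, symmetric])
    finally show ?thesis unfolding Sf_f .
  qed
  have uX: "is_unit_ring (X [])" using X0 uF by simp
  have QpX: "mcomp Q p = rinv X"
  proof -
    have "mprod (mcomp (rinv F) c) X = mcomp (mprod (rinv F) F) c" unfolding X_eq by (simp add: mcomp_mprod)
    also have "\<dots> = mone" using rinv_left[of F, OF uF] by simp
    finally have "mprod (mcomp Q p) X = mone" unfolding Qp .
    then show ?thesis by (rule inv_unique_left[where A=X, OF uX])
  qed
  have qp: "mcomp q p = mI"
  proof -
    have "mcomp q p = mprod p (mcomp Q p)" unfolding q_def by (rule comp_mIprod[where c=p, OF alg p0])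
    also have "\<dots> = mprod p (rinv X)" using QpX by simp
    also have "\<dots> = mprod mI (mprod X (rinv X))" unfolding p_def by (simp add: mprod_assoc)
    also have "\<dots> = mI" using rinv_right[of X, OF uX] by simp
    finally show ?thesis .
  qed
  \<comment> \<open>Step 2: K o h = I\<close>
  define K where "K = mcomp q gi"
  have mlK: "\<And>n. ml scale K n" unfolding K_def by (rule ml_mcomp[OF alg mlq mlgi])
  have aK: "addall K" using mlK ml_all_addall by blast
  have Kh: "mcomp K (boxconv f g) = mI"
  proof -
    have "mcomp K (boxconv f g) = mcomp (mcomp K g) p" unfolding box by (rule mcomp_assoc[OF aK, symmetric])
    also have "mcomp K g = mcomp q (mcomp gi g)" unfolding K_def by (rule mcomp_assoc[OF aq])
    also have "\<dots> = q" unfolding gi_g by (rule mcomp_mI_right[OF aq])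
    finally show ?thesis using qp by simp
  qed
  \<comment> \<open>Step 3: K is the inverse\<close>
  have K_S: "K = mprod mI (Sc H0)"
  proof -
    have "K = mcomp K mI" using mcomp_mI_right[OF aK] by simp
    also have "\<dots> = mcomp K (mcomp (boxconv f g) (mprod mI (Sc H0)))"
      unfolding box2 H0_def[symmetric] using comp_right_inv[OF alg H0inv] by simp
    also have "\<dots> = mcomp (mcomp K (boxconv f g)) (mprod mI (Sc H0))" by (rule mcomp_assoc[OF aK, symmetric])
    also have "\<dots> = mprod mI (Sc H0)" unfolding Kh by (rule mcomp_mI_left) simp
    finally show ?thesis .
  qed
  \<comment> \<open>Step 4: compute K\<close>
  have G_gi: "mcomp G gi = rinv Sg"
  proof -
    have "mcomp (mprod mI G) gi = mprod mI (mprod Sg (mcomp G gi))"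
      using comp_mIprod[where c=gi and F=G, OF alg gi0] unfolding gi_def by (simp add: mprod_assoc)
    then have "mprod mI (mprod Sg (mcomp G gi)) = mprod mI mone" using g_gi gG by simp
    then have "mprod Sg (mcomp G gi) = mone" by (rule mI_cancel)
    then show ?thesis by (rule inv_unique_right[where A=Sg, OF uSg])
  qed
  have Qgi: "mcomp Q gi = mcomp Sf (mprod (mprod (rinv Sg) mI) Sg)"
  proof -
    have "mcomp Q gi = mcomp Sf (mcomp (mprod G mI) gi)" unfolding Q_def by (rule mcomp_assoc[OF aSf])
    also have "mcomp (mprod G mI) gi = mprod (rinv Sg) gi" by (simp add: mcomp_mprod G_gi mcomp_mI_left[where c=gi, OF gi0])
    also have "\<dots> = mprod (mprod (rinv Sg) mI) Sg" unfolding gi_def by (simp add: mprod_assoc)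
    finally show ?thesis .
  qed
  have K_T: "K = mprod mI (mprod Sg (mcomp Sf (mprod (mprod (rinv Sg) mI) Sg)))"
  proof -
    have "K = mprod gi (mcomp Q gi)" unfolding K_def q_def by (rule comp_mIprod[where c=gi, OF alg gi0])
    also have "\<dots> = mprod gi (mcomp Sf (mprod (mprod (rinv Sg) mI) Sg))" using Qgi by simp
    also have "\<dots> = mprod mI (mprod Sg (mcomp Sf (mprod (mprod (rinv Sg) mI) Sg)))"
      unfolding gi_def by (simp add: mprod_assoc)
    finally show ?thesis .
  qed
  have "Sc H0 = mprod Sg (mcomp Sf (mprod (mprod (rinv Sg) mI) Sg))"
    using K_S K_T mI_cancel by metis
  then have part2: "S_transform scale (boxconv f g) = mprod (S_transform scale g)
            (mcomp (S_transform scale f)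
               (mprod (mprod (minv scale (S_transform scale g)) mI) (S_transform scale g)))"
    unfolding Sth Stf Stg minvSg .
  show ?thesis using part1 part2 by blast
qed

end
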